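(* Let $n\ge 1$ and $\rho>1$, and let $E_\rho\subset\mathbb C$ be the open Bernstein ellipse (foci $\pm1$, semi-major plus semi-minor axis equal to $\rho$) with closure $\bar E_\rho$ and boundary $\partial E_\rho$. Let $A:\bar E_\rho\to\mathbb C^{n\times n}$ and $\boldsymbol b:\bar E_\rho\to\mathbb C^n$ be continuous on $\bar E_\rho$ and analytic on $E_\rho$, with $A(t)$ invertible for every $t\in\bar E_\rho$. Put $\boldsymbol x(t)=A(t)^{-1}\boldsymbol b(t)$ and $\kappa_\rho:=\max_{t\in\partial E_\rho}\|\boldsymbol x(t)\|_2$. Let $M\ge 2$, $\Delta t=2/(M-1)$, and consider the equispaced times $t_{i-M}=-1,\ t_{i-M+1}=-1+\Delta t,\ \dots,\ t_{i-1}=1$, and the next time $t_i=1+\Delta t$. Let $X=[\boldsymbol x(t_{i-M})\,|\,\cdots\,|\,\boldsymbol x(t_{i-1})]\in\mathbb C^{n\times M}$, $\mathcal S=\mathrm{span}(X)$, and let $$\boldsymbol s^*\in\operatorname{argmin}_{\boldsymbol s\in\mathcal S}\|A(t_i)\boldsymbol s-\boldsymbol b(t_i)\|_2.$$ Set $r=(t_i+\sqrt{t_i^2-1})/\rho$ and assume $r<1$. Then for every nonnegative integer $R\le\frac12\sqrt{M-1}$, $$\|A(t_i)\boldsymbol s^*-\boldsymbol b(t_i)\|_2\le 2\|A(t_i)\|_2\,\kappa_\rho\Big[\frac{1}{1-r}+\frac{C(M,R)\,\rho}{(\rho-1)\sqrt{\rho^2r^2-1}}\Big]r^{R+1},$$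 where $C(M,R)=5\sqrt5\,\sqrt{2R+1}\,\sqrt M/\sqrt{2(M-1)}$.
   Context: $\|\cdot\|_2$ denotes the Euclidean norm for vectors and the spectral norm for matrices. The vector $\boldsymbol s^*$ is the initial guess produced by minimizing the residual of the linear system at time $t_i$ over the span of the $M$ previous solutions. *)

theory Defs
  imports "HOL-Analysis.Analysis"
begin

text \<open>Open Bernstein ellipse: foci at -1 and 1, semi-major axis (rho + 1/rho)/2,
  i.e. semi-major plus semi-minor axis equal to rho.\<close>
definition bernstein_ellipse :: "real \<Rightarrow> complex set" where
  "bernstein_ellipse \<rho> = {z. cmod (z - 1) + cmod (z + 1) < \<rho> + 1 / \<rho>}"

definition bernstein_ellipse_closed :: "real \<Rightarrow> complex set" where
  "bernstein_ellipse_closed \<rho> = {z. cmod (z - 1) + cmod (z + 1) \<le> \<rho> + 1 / \<rho>}"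

definition bernstein_ellipse_boundary :: "real \<Rightarrow> complex set" where
  "bernstein_ellipse_boundary \<rho> = {z. cmod (z - 1) + cmod (z + 1) = \<rho> + 1 / \<rho>}"

definition spec_norm :: "complex^'n^'n \<Rightarrow> real" where
  "spec_norm A = onorm (\<lambda>v. A *v v)"

end

theory Submission
  imports Defs "HOL-Complex_Analysis.Complex_Analysis" "HOL-Computational_Algebra.Polynomial"
begin

fun chebR :: "nat \<Rightarrow> real poly" where
  "chebR 0 = 1"
| "chebR (Suc 0) = [:0, 1:]"
| "chebR (Suc (Suc k)) = smult 2 ([:0, 1:] * chebR (Suc k)) - chebR k"

fun chebC :: "nat \<Rightarrow> complex \<Rightarrow> complex" where
  "chebC 0 z = 1"
| "chebC (Suc 0) z = z"
| "chebC (Suc (Suc k)) z = 2 * z * chebC (Suc k) z - chebC k z"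

lemma degree_chebR: "degree (chebR k) \<le> k"
proof (induction k rule: chebR.induct)
  case (3 k)
  have "degree (smult 2 ([:0, 1:] * chebR (Suc k))) \<le> Suc (Suc k)"
    using 3(1) by (simp add: degree_mult_le order_trans[OF degree_mult_le])
  moreover have "degree (chebR k) \<le> Suc (Suc k)" using 3(2) by simp
  ultimately show ?case by (simp add: degree_diff_le)
qed auto

lemma chebC_real: "chebC k (of_real x) = of_real (poly (chebR k) x)"
  by (induction k rule: chebR.induct) auto

lemma chebC_J: assumes "u \<noteq> 0"
  shows "chebC k ((u + 1/u)/2) = (u^k + (1/u)^k)/2"
proof (induction k rule: chebR.induct)
  case (3 k)
  define v where "v = 1/u"
  have uv: "u * v = 1" using assms by (simp add: v_def)
  have a: "u * v^(Suc k) = v^k" using uv by (simp add: power_Suc mult.assoc[symmetric])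
  have b: "v * u^(Suc k) = u^k" using uv by (simp add: power_Suc mult.assoc[symmetric] mult.commute)
  have "chebC (Suc (Suc k)) ((u + 1/u)/2) = 2 * ((u+v)/2) * ((u^Suc k + v^Suc k)/2) - (u^k + v^k)/2"
    by (subst chebC.simps, subst 3(1), subst 3(2), simp add: v_def)
  also have "\<dots> = (u * u^Suc k + u * v^Suc k + v * u^Suc k + v * v^Suc k - u^k - v^k)/2"
    by (simp add: field_simps)
  also have "\<dots> = (u^Suc (Suc k) + v^Suc (Suc k))/2" unfolding a b by (simp add: algebra_simps)
  finally show ?case by (simp add: v_def)
qed (use assms in auto)

lemma geom_step:
  fixes w a :: complex
  assumes "w \<noteq> 0" "w \<noteq> a"
  shows "a^n / (w^n * (w - a)) = a^n / w^(Suc n) + a^(Suc n) / (w^(Suc n) * (w - a))"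
proof -
  have "w - a \<noteq> 0" using assms by simp
  then show ?thesis using assms by (simp add: field_simps)
qed

lemma geom_split:
  fixes w a :: complex
  assumes "w \<noteq> 0" "w \<noteq> a"
  shows "1/(w-a) = (\<Sum>k\<le>R. a^k / w^(Suc k)) + a^(Suc R) / (w^(Suc R) * (w - a))"
proof (induction R)
  case 0 then show ?case using geom_step[OF assms, of 0] by simp
next
  case (Suc R)
  then show ?case using geom_step[OF assms, of "Suc R"] by (simp add: add.assoc)
qed

definition remk :: "nat \<Rightarrow> complex \<Rightarrow> complex \<Rightarrow> complex" where
  "remk R u w = u^(Suc R) / (w^(Suc R) * (w - u)) + (1/u)^(Suc R) / (w^(Suc R) * (w - 1/u))"

definition polk :: "nat \<Rightarrow> complex \<Rightarrow> complex \<Rightarrow> complex" where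
  "polk R t w = -1/w + (\<Sum>k\<le>R. 2 * chebC k t / w^(Suc k))"

lemma kernel_split:
  fixes u w :: complex
  assumes u: "u \<noteq> 0" and w: "w \<noteq> 0" "w \<noteq> u" "w \<noteq> 1/u"
  shows "((1 - 1/w^2)/2) / ((w + 1/w)/2 - (u + 1/u)/2) = polk R ((u + 1/u)/2) w + remk R u w"
proof -
  have pf: "((1 - 1/w^2)/2) / ((w + 1/w)/2 - (u + 1/u)/2) = -1/w + 1/(w-u) + 1/(w - 1/u)"
  proof -
    define v where "v = 1/u"
    have uv: "u * v = 1" using u by (simp add: v_def)
    have d1: "w - u \<noteq> 0" and d2: "w - v \<noteq> 0" using w by (auto simp: v_def)
    have e1: "(w + 1/w)/2 - (u + v)/2 = (w - u) * (w - v) / (2*w)"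
      using w(1) uv by (simp add: field_simps)
    have e2: "(1 - 1/w^2)/2 = (w^2 - 1) / (2*w^2)" using w(1) by (simp add: field_simps)
    have "((1 - 1/w^2)/2) / ((w + 1/w)/2 - (u + v)/2) = (w^2 - 1) / (w * ((w - u) * (w - v)))"
    proof -
      have Y: "(w - u) * (w - v) \<noteq> 0" using d1 d2 by simp
      have gen: "\<And>X Y. Y \<noteq> 0 \<Longrightarrow> (X/(2*w^2))/(Y/(2*w)) = X/(w*Y)"
        using w(1) by (simp add: field_simps power2_eq_square)
      show ?thesis unfolding e1 e2 by (rule gen[OF Y])
    qed
    also have "\<dots> = -1/w + 1/(w-u) + 1/(w - v)"
    proof -
      have "w^2 - 1 = -((w-u)*(w-v)) + w*(w-v) + w*(w-u)"
        using uv by (simp add: algebra_simps power2_eq_square)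
      then show ?thesis using w(1) d1 d2 by (simp add: field_simps)
    qed
    finally show ?thesis by (simp add: v_def)
  qed
  have "polk R ((u + 1/u)/2) w = -1/w + (\<Sum>k\<le>R. u^k / w^(Suc k)) + (\<Sum>k\<le>R. (1/u)^k / w^(Suc k))"
    unfolding polk_def chebC_J[OF u]
    by (simp add: sum.distrib[symmetric] add_divide_distrib)
  then show ?thesis
    unfolding pf remk_def
    using geom_split[OF w(1) w(2), of R] geom_split[OF w(1) w(3), of R]
    by simp
qed

definition Jk :: "complex \<Rightarrow> complex" where "Jk w = (w + 1/w)/2"

lemma phiJ:
  assumes "w \<noteq> 0"
  shows "cmod (Jk w - 1) + cmod (Jk w + 1) = cmod w + 1 / cmod w"
proof -
  have a: "Jk w - 1 = (w - 1)^2 / (2*w)" and b: "Jk w + 1 = (w + 1)^2 / (2*w)"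
    using assms by (auto simp: Jk_def field_simps power2_eq_square)
  have par: "(cmod (w-1))^2 + (cmod (w+1))^2 = 2 * (cmod w)^2 + 2"
    unfolding cmod_power2 by (simp add: power2_eq_square algebra_simps)
  have "cmod (Jk w - 1) + cmod (Jk w + 1) = ((cmod (w-1))^2 + (cmod (w+1))^2) / (2 * cmod w)"
    unfolding a b by (simp add: norm_divide norm_mult norm_power add_divide_distrib)
  also have "\<dots> = cmod w + 1 / cmod w" unfolding par using assms by (simp add: field_simps power2_eq_square)
  finally show ?thesis .
qed

lemma Jk_real: "Jk (complex_of_real s) = complex_of_real ((s + 1/s)/2)"
  by (simp add: Jk_def)

lemma Jk_surj: "\<exists>w. w \<noteq> 0 \<and> cmod w \<ge> 1 \<and> Jk w = z"
proof -
  define c where "c = csqrt (z^2 - 1)"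
  have cc: "c^2 = z^2 - 1" by (simp add: c_def)
  have prod: "(z + c) * (z - c) = 1" using cc by (simp add: algebra_simps power2_eq_square)
  then have nz: "z + c \<noteq> 0" "z - c \<noteq> 0" by auto
  have J1: "Jk (z + c) = z"
  proof -
    have "1/(z+c) = z - c" using prod nz by (simp add: field_simps)
    then show ?thesis by (simp add: Jk_def)
  qed
  have J2: "Jk (z - c) = z"
  proof -
    have "1/(z-c) = z + c" using prod nz by (simp add: field_simps)
    then show ?thesis by (simp add: Jk_def)
  qed
  have n: "cmod (z + c) * cmod (z - c) = 1" using prod by (metis norm_mult norm_one)
  show ?thesis
  proof (cases "cmod (z + c) \<ge> 1")
    case True then show ?thesis using nz J1 by blast
  next
    case False
    have "cmod (z - c) \<ge> 1"
    proof (rule ccontr)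
      assume "\<not> cmod (z - c) \<ge> 1"
      then have "cmod (z + c) * cmod (z - c) \<le> cmod (z + c) * 1"
        by (intro mult_left_mono) auto
      then show False using n False by simp
    qed
    then show ?thesis using nz J2 by blast
  qed
qed

lemma plus_inv_mono:
  fixes a s :: real
  assumes "a \<ge> 1" "s \<ge> 1" "a + 1/a \<le> s + 1/s"
  shows "a \<le> s"
proof (rule ccontr)
  assume "\<not> a \<le> s"
  then have has: "a > s" by simp
  have "a + 1/a - (s + 1/s) = (a - s) * (1 - 1/(a * s))"
    using assms by (simp add: field_simps)
  moreover have "1/(a * s) < 1"
  proof -
    have "a * s \<ge> a" using mult_left_mono[of 1 s a] assms by simp
    then have "a * s > 1" using has assms by linarith
    then show ?thesis by simp
  qed
  ultimately have "a + 1/a - (s + 1/s) > 0" using has by simp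
  then show False using assms by simp
qed

lemma bernstein_J:
  fixes a :: "nat \<Rightarrow> complex"
  assumes bnd: "\<And>x::real. -1 \<le> x \<Longrightarrow> x \<le> 1 \<Longrightarrow> cmod (\<Sum>k\<le>R. a k * (of_real x)^k) \<le> N"
    and w: "cmod w \<ge> 1"
  shows "cmod (\<Sum>k\<le>R. a k * (Jk w)^k) \<le> N * cmod w ^ R"
proof -
  define Q where "Q v = (\<Sum>k\<le>R. a k * (v^(R-k) * ((1 + v^2)/2)^k))" for v
  have Qeq: "Q v = v^R * (\<Sum>k\<le>R. a k * (Jk (1/v))^k)" if "v \<noteq> 0" for v
  proof -
    have "v^(R-k) * ((1 + v^2)/2)^k = v^R * (Jk (1/v))^k" if "k \<le> R" for k
    proof -
      have "(1 + v^2)/2 = v * Jk (1/v)" using \<open>v \<noteq> 0\<close> by (simp add: Jk_def field_simps power2_eq_square)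
      then have "v^(R-k) * ((1 + v^2)/2)^k = v^(R-k) * v^k * (Jk (1/v))^k"
        by (simp add: power_mult_distrib)
      also have "v^(R-k) * v^k = v^R" using that by (simp add: power_add[symmetric])
      finally show ?thesis .
    qed
    then show ?thesis unfolding Q_def by (simp add: sum_distrib_left algebra_simps)
  qed
  have holQ: "Q holomorphic_on UNIV" unfolding Q_def by (intro holomorphic_intros) auto
  have Qbnd: "cmod (Q v) \<le> N" if "v \<in> cball 0 1" for v
  proof (rule maximum_modulus_frontier[where S = "cball 0 1" and f = Q])
    show "Q holomorphic_on interior (cball 0 1)" using holQ by (rule holomorphic_on_subset) auto
    show "continuous_on (closure (cball 0 1)) Q"
      using holQ holomorphic_on_imp_continuous_on continuous_on_subset by blast
    show "bounded (cball (0::complex) 1)" by simp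
    show "v \<in> cball 0 1" by fact
  next
    fix z :: complex assume "z \<in> frontier (cball 0 1)"
    then have z1: "cmod z = 1" by (simp add: frontier_cball)
    then have z0: "z \<noteq> 0" by auto
    have "1/z = cnj z" using z1 by (simp add: complex_div_cnj[of 1 z])
    then have "Jk (1/z) = of_real (Re z)"
      by (simp add: Jk_def complex_eq_iff)
    moreover have "-1 \<le> Re z" "Re z \<le> 1" using abs_Re_le_cmod[of z] z1 by auto
    ultimately have "cmod (\<Sum>k\<le>R. a k * (Jk (1/z))^k) \<le> N" using bnd by simp
    then show "cmod (Q z) \<le> N" using Qeq[OF z0] z1 by (simp add: norm_mult norm_power)
  qed
  have w0: "w \<noteq> 0" using w by auto
  have "cmod (1/w) \<le> 1" using w by (simp add: norm_divide divide_le_eq)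
  then have "cmod (Q (1/w)) \<le> N" using Qbnd by simp
  then have "cmod ((1/w)^R) * cmod (\<Sum>k\<le>R. a k * (Jk w)^k) \<le> N"
    using Qeq[of "1/w"] w0 by (simp add: norm_mult)
  moreover have "cmod ((1/w)^R) = 1 / cmod w ^ R" by (simp add: norm_divide norm_power power_one_over)
  ultimately have "cmod (\<Sum>k\<le>R. a k * (Jk w)^k) / cmod w ^ R \<le> N" by simp
  then show ?thesis using w0 by (simp add: divide_le_eq)
qed

lemma bernstein_ellipse_bound:
  fixes a :: "nat \<Rightarrow> complex"
  assumes bnd: "\<And>x::real. -1 \<le> x \<Longrightarrow> x \<le> 1 \<Longrightarrow> cmod (\<Sum>k\<le>R. a k * (of_real x)^k) \<le> N"
    and s: "s \<ge> 1" and z: "cmod (z - 1) + cmod (z + 1) \<le> s + 1/s"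
  shows "cmod (\<Sum>k\<le>R. a k * z^k) \<le> N * s ^ R"
proof -
  obtain w where w: "w \<noteq> 0" "cmod w \<ge> 1" "Jk w = z" using Jk_surj by blast
  have "cmod w + 1/cmod w \<le> s + 1/s" using phiJ[OF w(1)] w(3) z by simp
  then have ws: "cmod w \<le> s" by (rule plus_inv_mono[OF w(2) s])
  have N0: "N \<ge> 0" using order_trans[OF norm_ge_zero bnd[of 0]] by simp
  have "cmod (\<Sum>k\<le>R. a k * z^k) \<le> N * cmod w ^ R" using bernstein_J[OF bnd w(2)] w(3) by simp
  also have "\<dots> \<le> N * s ^ R" using ws N0 by (intro mult_left_mono power_mono) auto
  finally show ?thesis .
qed

definition Vd :: "real set \<Rightarrow> real" where
  "Vd S = (\<Prod>x\<in>S. \<Prod>y\<in>S-{x}. \<bar>x - y\<bar>)"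

definition lag :: "real set \<Rightarrow> real \<Rightarrow> real \<Rightarrow> real" where
  "lag S x t = (\<Prod>y\<in>S-{x}. (t - y) / (x - y))"

lemma Vd_pos: "finite S \<Longrightarrow> Vd S > 0"
  unfolding Vd_def by (intro prod_pos) auto

lemma Vd_insert:
  assumes "finite T" "a \<notin> T"
  shows "Vd (insert a T) = (\<Prod>y\<in>T. \<bar>a - y\<bar>)^2 * Vd T"
proof -
  have 1: "insert a T - {a} = T" using assms by auto
  have 2: "(\<Prod>y\<in>insert a T - {x}. \<bar>x - y\<bar>) = \<bar>a - x\<bar> * (\<Prod>y\<in>T-{x}. \<bar>x - y\<bar>)" if "x \<in> T" for x
  proof -
    have "insert a T - {x} = insert a (T - {x})" using that assms by auto
    then show ?thesis using assms that by (simp add: abs_minus_commute)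
  qed
  have "Vd (insert a T) = (\<Prod>y\<in>T. \<bar>a - y\<bar>) * (\<Prod>x\<in>T. \<Prod>y\<in>insert a T - {x}. \<bar>x - y\<bar>)"
    unfolding Vd_def using assms by (simp add: 1)
  also have "(\<Prod>x\<in>T. \<Prod>y\<in>insert a T - {x}. \<bar>x - y\<bar>) = (\<Prod>x\<in>T. \<bar>a - x\<bar> * (\<Prod>y\<in>T-{x}. \<bar>x - y\<bar>))"
    by (rule prod.cong) (auto simp: 2)
  also have "\<dots> = (\<Prod>y\<in>T. \<bar>a - y\<bar>) * Vd T"
    unfolding Vd_def by (simp add: prod.distrib)
  finally show ?thesis by (simp add: power2_eq_square)
qed

lemma fekete_exists:
  assumes "finite G" "card G \<ge> Suc R"
  shows "\<exists>S. S \<subseteq> G \<and> card S = Suc R \<and> (\<forall>S'. S' \<subseteq> G \<and> card S' = Suc R \<longrightarrow> Vd S' \<le> Vd S)"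
proof -
  define F where "F = {S. S \<subseteq> G \<and> card S = Suc R}"
  have "F \<subseteq> Pow G" unfolding F_def by auto
  then have fF: "finite F" using assms(1) finite_subset by blast
  obtain S0 where "S0 \<subseteq> G \<and> card S0 = Suc R" using obtain_subset_with_card_n[OF assms(2)] by blast
  then have neF: "F \<noteq> {}" unfolding F_def by blast
  have "Max (Vd ` F) \<in> Vd ` F" using fF neF by (intro Max_in) auto
  then obtain S where S: "S \<in> F" "Vd S = Max (Vd ` F)" by force
  have "Vd S' \<le> Vd S" if "S' \<in> F" for S'
    unfolding S(2) using fF that by (intro Max_ge) auto
  then show ?thesis using S(1) unfolding F_def by blast
qed

lemma lag_self: "finite S \<Longrightarrow> lag S x x = 1"
  unfolding lag_def by (intro prod.neutral) auto

lemma lag_other: "finite S \<Longrightarrow> t \<in> S \<Longrightarrow> t \<noteq> x \<Longrightarrow> lag S x t = 0"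
  unfolding lag_def by (rule prod_zero) auto

lemma lag_fekete_bound:
  assumes G: "finite G" and S: "S \<subseteq> G" "card S = Suc R"
    and max: "\<forall>S'. S' \<subseteq> G \<and> card S' = Suc R \<longrightarrow> Vd S' \<le> Vd S"
    and x: "x \<in> S" and t: "t \<in> G"
  shows "\<bar>lag S x t\<bar> \<le> 1"
proof -
  have fS: "finite S" using S G finite_subset by blast
  show ?thesis
  proof (cases "t \<in> S")
    case True
    then show ?thesis using lag_self[OF fS] lag_other[OF fS] by (cases "t = x") auto
  next
    case False
    define T where "T = S - {x}"
    have fT: "finite T" using fS by (simp add: T_def)
    have xT: "x \<notin> T" and tT: "t \<notin> T" using False by (auto simp: T_def)
    have SI: "S = insert x T" using x by (auto simp: T_def)
    have cT: "card T = R" using S(2) x fS by (simp add: T_def)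
    have "insert t T \<subseteq> G" "card (insert t T) = Suc R" using t S fT tT cT by (auto simp: T_def)
    then have "Vd (insert t T) \<le> Vd (insert x T)" using max SI by auto
    then have "(\<Prod>y\<in>T. \<bar>t - y\<bar>)^2 * Vd T \<le> (\<Prod>y\<in>T. \<bar>x - y\<bar>)^2 * Vd T"
      using Vd_insert[OF fT xT] Vd_insert[OF fT tT] by simp
    then have "(\<Prod>y\<in>T. \<bar>t - y\<bar>)^2 \<le> (\<Prod>y\<in>T. \<bar>x - y\<bar>)^2"
      using Vd_pos[OF fT] by simp
    then have le: "(\<Prod>y\<in>T. \<bar>t - y\<bar>) \<le> (\<Prod>y\<in>T. \<bar>x - y\<bar>)"
      by (rule power2_le_imp_le) (simp add: prod_nonneg)
    have pos: "(\<Prod>y\<in>T. \<bar>x - y\<bar>) > 0" using xT by (intro prod_pos) auto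
    have "\<bar>lag S x t\<bar> = (\<Prod>y\<in>T. \<bar>t - y\<bar>) / (\<Prod>y\<in>T. \<bar>x - y\<bar>)"
      unfolding lag_def T_def[symmetric] by (simp add: prod_dividef abs_prod)
    also have "\<dots> \<le> 1" using le pos by simp
    finally show ?thesis .
  qed
qed

definition Lpoly :: "real set \<Rightarrow> real \<Rightarrow> real poly" where
  "Lpoly S x = smult (1 / (\<Prod>y\<in>S-{x}. (x - y))) (\<Prod>y\<in>S-{x}. [:-y, 1:])"

lemma poly_Lpoly: "poly (Lpoly S x) t = lag S x t"
  unfolding Lpoly_def lag_def by (simp add: poly_prod prod_dividef)

lemma degree_Lpoly: assumes "finite S" "x \<in> S" shows "degree (Lpoly S x) \<le> card S - 1"
proof -
  have "degree (\<Prod>y\<in>S-{x}. [:-y, 1:]) \<le> (\<Sum>y\<in>S-{x}. degree [:-y, (1::real):])"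
    using degree_prod_sum_le[of "S-{x}" "\<lambda>y. [:-y, (1::real):]"] assms by (simp add: o_def)
  also have "\<dots> = card S - 1" using assms by simp
  finally have "degree (\<Prod>y\<in>S-{x}. [:-y, 1:]) \<le> card S - 1" .
  then show ?thesis unfolding Lpoly_def using degree_smult_le order_trans by blast
qed

lemma lagrange_exact:
  assumes fS: "finite S" and cS: "card S = Suc R" and dp: "degree p \<le> R"
  shows "(\<Sum>x\<in>S. lag S x t * poly p x) = poly p t"
proof -
  define q where "q = (\<Sum>x\<in>S. smult (poly p x) (Lpoly S x))"
  have dq: "degree q \<le> R" unfolding q_def
  proof (intro degree_sum_le fS)
    fix x assume "x \<in> S"
    then have "degree (Lpoly S x) \<le> R" using degree_Lpoly[OF fS] cS by fastforce
    then show "degree (smult (poly p x) (Lpoly S x)) \<le> R" using degree_smult_le order_trans by blast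
  qed
  have pq: "poly q t = (\<Sum>x\<in>S. lag S x t * poly p x)" for t
    unfolding q_def poly_sum by (intro sum.cong) (auto simp: poly_Lpoly)
  have "poly q y = poly p y" if "y \<in> S" for y
  proof -
    have "(\<Sum>x\<in>S. lag S x y * poly p x) = lag S y y * poly p y + (\<Sum>x\<in>S-{y}. lag S x y * poly p x)"
      by (rule sum.remove[OF fS that])
    also have "(\<Sum>x\<in>S-{y}. lag S x y * poly p x) = 0"
      by (rule sum.neutral) (use lag_other[OF fS that] in auto)
    finally have "(\<Sum>x\<in>S. lag S x y * poly p x) = lag S y y * poly p y" by simp
    then show ?thesis using pq lag_self[OF fS] by simp
  qed
  then have "q = p"
    by (rule poly_eqI_degree[where A = S]) (use cS dq dp in auto)
  then have "poly p t = poly q t" by simp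
  then show ?thesis using pq[of t] by simp
qed

lemma poly_as_sum:
  fixes q :: "'a::{comm_semiring_0,semiring_1} poly"
  assumes "degree q \<le> R"
  shows "poly q z = (\<Sum>k\<le>R. coeff q k * z^k)"
proof -
  have "poly q z = (\<Sum>k\<le>degree q. coeff q k * z^k)" by (rule poly_altdef)
  also have "\<dots> = (\<Sum>k\<le>R. coeff q k * z^k)"
  proof (rule sum.mono_neutral_left)
    show "\<forall>i\<in>{..R} - {..degree q}. coeff q i * z ^ i = 0" by (auto simp: coeff_eq_0)
  qed (use assms in auto)
  finally show ?thesis .
qed

lemma poly_ofreal: "poly (map_poly complex_of_real p) (of_real x) = of_real (poly p x)"
  by (induction p) (auto simp: map_poly_pCons)

lemma pderiv_ofreal: "pderiv (map_poly complex_of_real p) = map_poly of_real (pderiv p)"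
  by (rule poly_eqI) (simp add: coeff_pderiv coeff_map_poly)

lemma deriv_iter_poly: "(deriv ^^ n) (poly P) = poly ((pderiv ^^ n) (P :: complex poly))"
proof (induction n)
  case (Suc n)
  have "deriv (poly ((pderiv ^^ n) P)) = poly (pderiv ((pderiv ^^ n) P))"
    by (rule ext, rule DERIV_imp_deriv, rule poly_DERIV)
  then show ?case using Suc by simp
qed simp

lemma second_deriv_bound:
  fixes p :: "real poly"
  assumes dp: "degree p \<le> R" and bnd: "\<And>x. -1 \<le> x \<Longrightarrow> x \<le> 1 \<Longrightarrow> \<bar>poly p x\<bar> \<le> N"
    and xi: "-1 \<le> \<xi>" "\<xi> \<le> 1" and d: "\<delta> > 0" and s: "s \<ge> 1" "2 + 2 * \<delta> \<le> s + 1/s"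
  shows "\<bar>poly (pderiv (pderiv p)) \<xi>\<bar> \<le> 2 * N * s^R / \<delta>^2"
proof -
  define P where "P = map_poly complex_of_real p"
  have dP: "degree P \<le> R" unfolding P_def using dp by (simp add: degree_map_poly)
  have bndP: "cmod (\<Sum>k\<le>R. coeff P k * (of_real x)^k) \<le> N" if "-1 \<le> x" "x \<le> 1" for x :: real
  proof -
    have "(\<Sum>k\<le>R. coeff P k * (of_real x)^k) = poly P (of_real x)" by (rule poly_as_sum[OF dP, symmetric])
    also have "\<dots> = of_real (poly p x)" unfolding P_def by (rule poly_ofreal)
    finally show ?thesis using bnd[OF that] by simp
  qed
  have "cmod ((deriv ^^ 2) (poly P) (of_real \<xi>)) \<le> fact 2 * (N * s^R) / \<delta>^2"
  proof (rule Cauchy_inequality)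
    show "poly P holomorphic_on ball (complex_of_real \<xi>) \<delta>" by (intro holomorphic_intros)
    show "continuous_on (cball (complex_of_real \<xi>) \<delta>) (poly P)" by (intro continuous_intros)
    show "0 < \<delta>" by fact
  next
    fix x assume x: "cmod (of_real \<xi> - x) = \<delta>"
    have "cmod (x - 1) + cmod (x + 1) \<le> (cmod (of_real \<xi> - 1) + cmod (of_real \<xi> - x)) + (cmod (of_real \<xi> + 1) + cmod (of_real \<xi> - x))"
      using norm_triangle_ineq[of "x - of_real \<xi>" "of_real \<xi> - 1"] norm_triangle_ineq[of "x - of_real \<xi>" "of_real \<xi> + 1"]
      by (simp add: norm_minus_commute)
    also have "\<dots> = 2 + 2 * \<delta>"
    proof -
      have "cmod (complex_of_real \<xi> - 1) = 1 - \<xi>"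
        using xi norm_of_real[of "\<xi> - 1"] by (simp del: norm_of_real)
      moreover have "cmod (complex_of_real \<xi> + 1) = 1 + \<xi>"
        using xi norm_of_real[of "\<xi> + 1"] by (simp del: norm_of_real)
      ultimately show ?thesis using x by simp
    qed
    finally have "cmod (x - 1) + cmod (x + 1) \<le> s + 1/s" using s by simp
    then show "cmod (poly P x) \<le> N * s^R"
      unfolding poly_as_sum[OF dP] using bernstein_ellipse_bound[where a="coeff P" and R=R and N=N and s=s and z=x] bndP s(1) by blast
  qed
  moreover have "(deriv ^^ 2) (poly P) (of_real \<xi>) = of_real (poly (pderiv (pderiv p)) \<xi>)"
    unfolding deriv_iter_poly P_def by (simp add: pderiv_ofreal poly_ofreal numeral_2_eq_2)
  ultimately show ?thesis by simp
qed


lemma s_bound: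
  fixes R :: nat
  assumes R: "R \<ge> 1"
  defines "\<delta> \<equiv> 1 / real R ^ 2"
  defines "s \<equiv> 1 + \<delta> + sqrt (2 * \<delta> + \<delta>^2)"
  shows "s \<ge> 1" "2 + 2 * \<delta> \<le> s + 1/s" "s ^ R \<le> 9" "\<delta> > 0"
proof -
  show d0: "\<delta> > 0" using R by (simp add: \<delta>_def)
  show s1: "s \<ge> 1" using d0 by (simp add: s_def)
  have sq: "(sqrt (2 * \<delta> + \<delta>^2))^2 = 2 * \<delta> + \<delta>^2" using d0 by simp
  have "s * (1 + \<delta> - sqrt (2 * \<delta> + \<delta>^2)) = (1 + \<delta>)^2 - (sqrt (2 * \<delta> + \<delta>^2))^2"
    by (simp add: s_def algebra_simps power2_eq_square)
  also have "\<dots> = 1" unfolding sq by (simp add: power2_eq_square algebra_simps)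
  finally have "1/s = 1 + \<delta> - sqrt (2 * \<delta> + \<delta>^2)" using s1 by (simp add: field_simps)
  then show "2 + 2 * \<delta> \<le> s + 1/s" by (simp add: s_def)
  show "s ^ R \<le> 9"
  proof (cases "R = 1")
    case True
    then have "\<delta> = 1" by (simp add: \<delta>_def)
    then have "s = 2 + sqrt 3" by (simp add: s_def)
    moreover have "sqrt 3 \<le> 2" by (rule real_le_lsqrt) auto
    ultimately show ?thesis using True by simp
  next
    case False
    then have R2: "R \<ge> 2" using R by simp
    have "sqrt (2 * \<delta> + \<delta>^2) \<le> (2 * real R - 1) / real R ^ 2"
    proof (rule real_le_lsqrt)
      show "0 \<le> (2 * real R - 1) / real R ^ 2" using R by simp
      have "2 * \<delta> + \<delta>^2 = (2 * real R ^ 2 + 1) / real R ^ 4"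
        using R by (simp add: \<delta>_def field_simps power2_eq_square power4_eq_xxxx)
      also have "\<dots> \<le> (2 * real R - 1)^2 / real R ^ 4"
      proof (rule divide_right_mono)
        have "real R \<ge> 2" using R2 by simp
        then have "2 * real R ^ 2 - 4 * real R \<ge> 0" by (simp add: power2_eq_square algebra_simps mult_right_mono[of 2 "real R" "real R", simplified])
        then show "2 * real R ^ 2 + 1 \<le> (2 * real R - 1)^2" by (simp add: power2_eq_square algebra_simps)
      qed simp
      also have "\<dots> = ((2 * real R - 1) / real R ^ 2)^2" by (simp add: power_divide power4_eq_xxxx power2_eq_square)
      finally show "2 * \<delta> + \<delta>^2 \<le> ((2 * real R - 1) / real R ^ 2)^2" .
    qed
    moreover have "\<delta> + (2 * real R - 1) / real R ^ 2 = 2 / real R"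
      using R by (simp add: \<delta>_def field_simps power2_eq_square)
    ultimately have "s \<le> 1 + 2 / real R" unfolding s_def by linarith
    then have "s ^ R \<le> (1 + 2 / real R) ^ R" using s1 by (intro power_mono) auto
    also have "\<dots> \<le> exp (2 / real R) ^ R" by (intro power_mono) (auto simp: add_nonneg_nonneg)
    also have "\<dots> = exp 2" using R by (simp add: exp_of_nat_mult[symmetric])
    also have "\<dots> = exp 1 * exp 1" by (simp add: exp_add[symmetric])
    also have "\<dots> \<le> 3 * 3" using exp_le by (intro mult_mono) auto
    finally show ?thesis by simp
  qed
qed

lemma norming:
  fixes p :: "real poly" and M R :: nat
  assumes M: "M \<ge> 2" and MR: "4 * R^2 \<le> M - 1" and dp: "degree p \<le> R"
    and grid: "\<And>j. j < M \<Longrightarrow> \<bar>poly p (-1 + real j * (2 / (real M - 1)))\<bar> \<le> 1"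
    and x: "-1 \<le> x" "x \<le> 1"
  shows "\<bar>poly p x\<bar> \<le> 3"
proof -
  define h where "h = 2 / (real M - 1)"
  have Mr: "real M - 1 > 0" using M by simp
  have h0: "h > 0" using Mr by (simp add: h_def)
  have "\<exists>x\<in>{-1..1::real}. \<forall>y\<in>{-1..1}. \<bar>poly p y\<bar> \<le> \<bar>poly p x\<bar>"
    by (rule continuous_attains_sup) (auto intro!: continuous_intros)
  then obtain xs where xs: "xs \<in> {-1..1}" and xsmax: "\<forall>y\<in>{-1..1}. \<bar>poly p y\<bar> \<le> \<bar>poly p xs\<bar>"
    by blast
  define N where "N = \<bar>poly p xs\<bar>"
  have bndN: "\<And>y. -1 \<le> y \<Longrightarrow> y \<le> 1 \<Longrightarrow> \<bar>poly p y\<bar> \<le> N" using xsmax by (auto simp: N_def)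
  have "N \<le> 3"
  proof (cases "N \<le> 1")
    case True then show ?thesis by simp
  next
    case N1: False
    show ?thesis
    proof (cases "R = 0")
      case True
      then have "degree p = 0" using dp by simp
      then have "\<And>y. poly p y = coeff p 0" by (simp add: poly_altdef)
      then have "N \<le> 1" using grid[of 0] M by (simp add: N_def)
      then show ?thesis by simp
    next
      case False
      then have R1: "R \<ge> 1" by simp
      define y where "y = (xs + 1) / h"
      have y0: "y \<ge> 0" using xs h0 by (simp add: y_def)
      have yM: "y \<le> real M - 1"
      proof -
        have "y = (xs + 1) * (real M - 1) / 2" by (simp add: y_def h_def)
        also have "\<dots> \<le> 2 * (real M - 1) / 2" using xs Mr by (intro divide_right_mono mult_right_mono) auto
        finally show ?thesis by simp
      qed
      define j where "j = nat \<lfloor>y + 1/2\<rfloor>"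
      have jy: "real j = of_int \<lfloor>y + 1/2\<rfloor>" using y0 by (simp add: j_def)
      have j1: "\<bar>real j - y\<bar> \<le> 1/2" unfolding jy
        using of_int_floor_le[of "y + 1/2"] real_of_int_floor_add_one_gt[of "y + 1/2"] by linarith
      have jM: "j < M" using j1 yM by linarith
      define t where "t = -1 + real j * h"
      have pt: "\<bar>poly p t\<bar> \<le> 1" using grid[OF jM] by (simp add: t_def h_def)
      have td: "\<bar>t - xs\<bar> \<le> h / 2"
      proof -
        have "t - xs = h * (real j - y)" using h0 by (simp add: t_def y_def field_simps)
        then have "\<bar>t - xs\<bar> = h * \<bar>real j - y\<bar>" using h0 by (simp add: abs_mult)
        also have "\<dots> \<le> h * (1/2)" using j1 h0 by (intro mult_left_mono) auto
        finally show ?thesis by simp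
      qed
      have t11: "-1 \<le> t" "t \<le> 1" using jM h0 Mr by (auto simp: t_def h_def field_simps)
      have txs: "t \<noteq> xs" using pt N1 by (auto simp: N_def)
      have xsm1: "xs \<noteq> -1" using grid[of 0] M N1 by (auto simp: N_def)
      have xs1: "xs \<noteq> 1"
      proof
        assume "xs = 1"
        moreover have "-1 + real (M - 1) * (2 / (real M - 1)) = 1"
        proof -
          have "real (M - 1) = real M - 1" using M by (simp add: of_nat_diff)
          moreover have "real M - 1 \<noteq> 0" using Mr by linarith
          ultimately show ?thesis by (simp add: field_simps)
        qed
        ultimately show False using grid[of "M - 1"] M N1 by (auto simp: N_def)
      qed
      have xsi: "-1 < xs" "xs < 1" using xs xsm1 xs1 by auto
      have dz: "poly (pderiv p) xs = 0"
      proof -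
        define d where "d = min (xs + 1) (1 - xs)"
        have d0: "d > 0" using xsi by (simp add: d_def)
        have near: "\<bar>poly p z\<bar> \<le> N" if "\<bar>xs - z\<bar> < d" for z
          using that bndN[of z] by (auto simp: d_def)
        show ?thesis
        proof (cases "poly p xs \<ge> 0")
          case True
          then show ?thesis
            using DERIV_local_max[OF poly_DERIV d0] near True by (force simp: N_def)
        next
          case False
          then show ?thesis
            using DERIV_local_min[OF poly_DERIV d0] near False by (force simp: N_def)
        qed
      qed
      obtain \<xi> where \<xi>: "-1 \<le> \<xi>" "\<xi> \<le> 1"
        and tay: "poly p t = (\<Sum>m<2. poly ((pderiv ^^ m) p) xs / fact m * (t - xs)^m)
                     + poly ((pderiv ^^ 2) p) \<xi> / fact 2 * (t - xs)^2"
      proof -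
        have "\<exists>\<xi>. (if t < xs then t < \<xi> \<and> \<xi> < xs else xs < \<xi> \<and> \<xi> < t) \<and>
           poly p t = (\<Sum>m<2. poly ((pderiv ^^ m) p) xs / fact m * (t - xs)^m)
                     + poly ((pderiv ^^ 2) p) \<xi> / fact 2 * (t - xs)^2"
          by (rule Taylor[where a = "-1" and b = 1]) (use xs t11 txs in \<open>auto intro: poly_DERIV\<close>)
        then obtain \<xi> where "(if t < xs then t < \<xi> \<and> \<xi> < xs else xs < \<xi> \<and> \<xi> < t)"
          "poly p t = (\<Sum>m<2. poly ((pderiv ^^ m) p) xs / fact m * (t - xs)^m)
                     + poly ((pderiv ^^ 2) p) \<xi> / fact 2 * (t - xs)^2" by blast
        moreover then have "-1 \<le> \<xi>" "\<xi> \<le> 1" using xs t11 by (auto split: if_splits)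
        ultimately show ?thesis using that by blast
      qed
      have tay2: "poly p t - poly p xs = poly (pderiv (pderiv p)) \<xi> / 2 * (t - xs)^2"
        using tay dz by (simp add: numeral_2_eq_2 lessThan_Suc)
      define \<delta> where "\<delta> = 1 / real R ^ 2"
      define s where "s = 1 + \<delta> + sqrt (2 * \<delta> + \<delta>^2)"
      note sb = s_bound[OF R1, folded \<delta>_def, folded s_def]
      have d2: "\<bar>poly (pderiv (pderiv p)) \<xi>\<bar> \<le> 2 * N * s^R / \<delta>^2"
        by (rule second_deriv_bound[OF dp bndN \<xi> sb(4) sb(1) sb(2)])
      have N0: "N \<ge> 0" by (simp add: N_def)
      have hR: "(h/2)^2 / \<delta>^2 \<le> 1/16"
      proof -
        have gen: "\<And>m r::real. m \<noteq> 0 \<Longrightarrow> r \<noteq> 0 \<Longrightarrow> ((2/m)/2)^2 / (1/r^2)^2 = (r^2/m)^2"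
          by (simp add: field_simps power2_eq_square)
        have "(h/2)^2 / \<delta>^2 = (real R ^ 2 / (real M - 1))^2"
          unfolding h_def \<delta>_def by (rule gen) (use Mr R1 in auto)
        also have "\<dots> \<le> (1/4)^2"
        proof (rule power_mono)
          have "real (4 * R^2) \<le> real (M - 1)" using MR by (simp only: of_nat_le_iff)
          moreover have "real (M - 1) = real M - 1" using M by (simp add: of_nat_diff)
          ultimately have "4 * real R ^ 2 \<le> real M - 1" by simp
          then show "real R ^ 2 / (real M - 1) \<le> 1/4" using Mr by (simp add: field_simps)
        qed (use Mr in simp)
        also have "(1/4::real)^2 = 1/16" by (simp add: power2_eq_square)
        finally show ?thesis .
      qed
      have "\<bar>poly p t - poly p xs\<bar> = \<bar>poly (pderiv (pderiv p)) \<xi>\<bar> / 2 * (t - xs)^2"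
        unfolding tay2 by (simp add: abs_mult)
      also have "\<dots> \<le> (2 * N * s^R / \<delta>^2) / 2 * (h/2)^2"
      proof (rule mult_mono)
        have "\<bar>t - xs\<bar>^2 \<le> (h/2)^2" using td by (intro power_mono) auto
        then show "(t - xs)^2 \<le> (h/2)^2" by simp
        show "\<bar>poly (pderiv (pderiv p)) \<xi>\<bar> / 2 \<le> 2 * N * s ^ R / \<delta>\<^sup>2 / 2" using d2 by (intro divide_right_mono) auto
        show "0 \<le> 2 * N * s ^ R / \<delta>\<^sup>2 / 2" using N0 sb(1) by simp
      qed simp
      also have "\<dots> = N * s^R * ((h/2)^2 / \<delta>^2)" by (simp add: field_simps)
      also have "\<dots> \<le> N * 9 * (1/16)"
        using sb(3) hR N0 sb(1) by (intro mult_mono) auto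
      finally have "\<bar>poly p t - poly p xs\<bar> \<le> N * 9 / 16" by simp
      moreover have "N \<le> \<bar>poly p t\<bar> + \<bar>poly p t - poly p xs\<bar>" unfolding N_def by linarith
      ultimately have "N \<le> 1 + N * 9 / 16" using pt by linarith
      then show ?thesis by simp
    qed
  qed
  then show ?thesis using bndN x by (meson order_trans)
qed

definition phiE :: "complex \<Rightarrow> real" where "phiE z = cmod (z - 1) + cmod (z + 1)"

lemma phiE_convex: "convex_on UNIV phiE"
proof (rule convex_onI)
  fix t :: real and x y :: complex assume t: "0 < t" "t < 1"
  have "cmod ((1 - t) *\<^sub>R x + t *\<^sub>R y - 1) \<le> (1 - t) * cmod (x - 1) + t * cmod (y - 1)"
  proof -
    have "(1 - t) *\<^sub>R x + t *\<^sub>R y - 1 = (1 - t) *\<^sub>R (x - 1) + t *\<^sub>R (y - 1)" by (simp add: algebra_simps)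
    then show ?thesis using t norm_triangle_ineq[of "(1 - t) *\<^sub>R (x - 1)" "t *\<^sub>R (y - 1)"] by simp
  qed
  moreover have "cmod ((1 - t) *\<^sub>R x + t *\<^sub>R y + 1) \<le> (1 - t) * cmod (x + 1) + t * cmod (y + 1)"
  proof -
    have "(1 - t) *\<^sub>R x + t *\<^sub>R y + 1 = (1 - t) *\<^sub>R (x + 1) + t *\<^sub>R (y + 1)" by (simp add: algebra_simps)
    then show ?thesis using t norm_triangle_ineq[of "(1 - t) *\<^sub>R (x + 1)" "t *\<^sub>R (y + 1)"] by simp
  qed
  ultimately show "phiE ((1 - t) *\<^sub>R x + t *\<^sub>R y) \<le> (1 - t) * phiE x + t * phiE y"
    by (simp add: phiE_def algebra_simps)
qed simp

lemma closed_ellipse_eq: "bernstein_ellipse_closed \<rho> = {z. phiE z \<le> \<rho> + 1/\<rho>}"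
  by (simp add: bernstein_ellipse_closed_def phiE_def)
lemma open_ellipse_eq: "bernstein_ellipse \<rho> = {z. phiE z < \<rho> + 1/\<rho>}"
  by (simp add: bernstein_ellipse_def phiE_def)
lemma boundary_ellipse_eq: "bernstein_ellipse_boundary \<rho> = {z. phiE z = \<rho> + 1/\<rho>}"
  by (simp add: bernstein_ellipse_boundary_def phiE_def)

lemma continuous_phiE: "continuous_on S phiE"
  unfolding phiE_def by (intro continuous_intros)

lemma convex_closed_ellipse: "convex (bernstein_ellipse_closed \<rho>)"
  unfolding closed_ellipse_eq convex_alt
proof (intro ballI allI impI, simp)
  fix x y :: complex and u :: real
  assume x: "phiE x \<le> \<rho> + 1/\<rho>" and y: "phiE y \<le> \<rho> + 1/\<rho>" and u: "0 \<le> u \<and> u \<le> 1"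
  show "phiE ((1 - u) *\<^sub>R x + u *\<^sub>R y) \<le> \<rho> + 1/\<rho>"
  proof (cases "u = 0 \<or> u = 1")
    case True then show ?thesis using x y by auto
  next
    case False
    then have u': "0 < u" "u < 1" using u by auto
    have "phiE ((1 - u) *\<^sub>R x + u *\<^sub>R y) \<le> (1 - u) * phiE x + u * phiE y"
      using convex_onD[OF phiE_convex, of u x y] u by simp
    also have "\<dots> \<le> (1 - u) * (\<rho> + 1/\<rho>) + u * (\<rho> + 1/\<rho>)"
      using x y u' by (intro add_mono mult_left_mono) auto
    also have "\<dots> = ((1 - u) + u) * (\<rho> + 1/\<rho>)" by (rule distrib_right[symmetric])
    finally show ?thesis by simp
  qed
qed

lemma open_open_ellipse: "open (bernstein_ellipse \<rho>)"
  unfolding open_ellipse_eq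
  unfolding phiE_def by (intro open_Collect_less continuous_intros)

lemma open_sub_closed: "bernstein_ellipse \<rho> \<subseteq> bernstein_ellipse_closed \<rho>"
  unfolding open_ellipse_eq closed_ellipse_eq by auto

lemma phiE_ge2: "phiE z \<ge> 2"
proof -
  have "cmod ((1 - z) + (z + 1)) \<le> cmod (1 - z) + cmod (z + 1)" by (rule norm_triangle_ineq)
  then show ?thesis by (simp add: phiE_def norm_minus_commute)
qed

lemma phiE_zero: "phiE 0 = 2" by (simp add: phiE_def)

lemma interior_closed_ellipse:
  assumes "\<rho> > 1"
  shows "interior (bernstein_ellipse_closed \<rho>) \<subseteq> bernstein_ellipse \<rho>"
proof
  fix z assume z: "z \<in> interior (bernstein_ellipse_closed \<rho>)"
  define c where "c = \<rho> + 1/\<rho>"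
  have c2: "c > 2"
  proof -
    have "(\<rho> - 1)^2 > 0" using assms by simp
    then have "\<rho>^2 + 1 > 2 * \<rho>" by (simp add: power2_eq_square algebra_simps)
    then show ?thesis using assms by (simp add: c_def field_simps power2_eq_square)
  qed
  obtain e where e: "e > 0" "ball z e \<subseteq> bernstein_ellipse_closed \<rho>"
    using z by (meson mem_interior)
  have zc: "phiE z \<le> c" using z interior_subset closed_ellipse_eq c_def by blast
  show "z \<in> bernstein_ellipse \<rho>"
  proof (rule ccontr)
    assume "z \<notin> bernstein_ellipse \<rho>"
    then have zc': "phiE z = c" using zc by (simp add: open_ellipse_eq c_def)
    then have z0: "z \<noteq> 0" using phiE_zero c2 by auto
    define a where "a = e / (2 * cmod z)"
    have a0: "a > 0" using e z0 by (simp add: a_def)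
    have "dist z ((1 + a) *\<^sub>R z) = a * cmod z" using a0
      by (simp add: dist_norm algebra_simps)
    also have "\<dots> < e" using e z0 by (simp add: a_def)
    finally have "(1 + a) *\<^sub>R z \<in> bernstein_ellipse_closed \<rho>" using e by auto
    then have le: "phiE ((1 + a) *\<^sub>R z) \<le> c" by (simp add: closed_ellipse_eq c_def)
    have "z = (1 - 1/(1+a)) *\<^sub>R 0 + (1/(1+a)) *\<^sub>R ((1 + a) *\<^sub>R z)" using a0 by simp
    then have "phiE z \<le> (1 - 1/(1+a)) * phiE 0 + (1/(1+a)) * phiE ((1 + a) *\<^sub>R z)"
      using convex_onD[OF phiE_convex, of "1/(1+a)" 0 "(1 + a) *\<^sub>R z"] a0 by simp
    also have "\<dots> \<le> (1 - 1/(1+a)) * 2 + (1/(1+a)) * c"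
      using le a0 by (simp add: phiE_zero divide_right_mono)
    also have "\<dots> < c"
    proof -
      have a1: "1 + a \<noteq> 0" using a0 by simp
      have eq: "(1 - 1/(1+a)) * 2 + (1/(1+a)) * c = (2*a + c)/(1+a)"
        by (simp add: diff_divide_distrib[symmetric] add_divide_distrib[symmetric] a1 divide_simps)
      have "a * 2 < a * c" using a0 c2 by simp
      then have "2*a + c < c * (1 + a)" by (simp add: algebra_simps)
      then have "(2*a + c)/(1+a) < c" using a0 by (simp add: divide_less_eq)
      then show ?thesis using eq by simp
    qed
    finally show False using zc' by simp
  qed
qed

lemma Jk_boundary: "w \<noteq> 0 \<Longrightarrow> cmod w = \<rho> \<Longrightarrow> Jk w \<in> bernstein_ellipse_boundary \<rho>"
  using phiJ[of w] by (simp add: boundary_ellipse_eq phiE_def)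

lemma plus_inv_strict:
  fixes a s :: real
  assumes "a \<ge> 1" "s > a"
  shows "a + 1/a < s + 1/s"
proof -
  have "s + 1/s - (a + 1/a) = (s - a) * (1 - 1/(a * s))"
    using assms by (simp add: field_simps)
  moreover have "a * s > 1"
  proof -
    have "a * s \<ge> s" using mult_right_mono[of 1 a s] assms by simp
    then show ?thesis using assms by linarith
  qed
  then have "1 - 1/(a * s) > 0" by simp
  then have "(s - a) * (1 - 1/(a * s)) > 0" using assms by simp
  ultimately show ?thesis by linarith
qed

lemma deriv_Jk: "w \<noteq> 0 \<Longrightarrow> deriv Jk w = (1 - 1/w^2)/2"
proof -
  assume w: "w \<noteq> 0"
  have "(Jk has_field_derivative ((1 - 1/w^2)/2)) (at w)"
    unfolding Jk_def[abs_def]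
    by (rule derivative_eq_intros refl | use w in \<open>simp add: field_simps power2_eq_square\<close>)+
  then show ?thesis by (rule DERIV_imp_deriv)
qed

lemma Jk_holo: "Jk holomorphic_on (- {0})"
  unfolding Jk_def[abs_def] by (intro holomorphic_intros) auto

lemma Jk_analytic: "Jk analytic_on (- {0})"
  using Jk_holo by (simp add: analytic_on_open open_Compl)

lemma partial_frac:
  fixes u w :: complex
  assumes u: "u \<noteq> 0" and w: "w \<noteq> 0" "w \<noteq> u" "w \<noteq> 1/u"
  shows "((1 - 1/w^2)/2) / (Jk w - Jk u) = -1/w + 1/(w-u) + 1/(w - 1/u)"
proof -
  define v where "v = 1/u"
  have uv: "u * v = 1" using u by (simp add: v_def)
  have d1: "w - u \<noteq> 0" and d2: "w - v \<noteq> 0" using w by (auto simp: v_def)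
  have e1: "Jk w - Jk u = (w - u) * (w - v) / (2*w)"
    using w(1) uv u by (simp add: Jk_def v_def field_simps)
  have e2: "(1 - 1/w^2)/2 = (w^2 - 1) / (2*w^2)" using w(1) by (simp add: field_simps)
  have "((1 - 1/w^2)/2) / (Jk w - Jk u) = (w^2 - 1) / (w * ((w - u) * (w - v)))"
  proof -
    have Y: "(w - u) * (w - v) \<noteq> 0" using d1 d2 by simp
    have gen: "\<And>X Y. Y \<noteq> 0 \<Longrightarrow> (X/(2*w^2))/(Y/(2*w)) = X/(w*Y)"
      using w(1) by (simp add: field_simps power2_eq_square)
    show ?thesis unfolding e1 e2 by (rule gen[OF Y])
  qed
  also have "\<dots> = -1/w + 1/(w-u) + 1/(w - v)"
  proof -
    have "w^2 - 1 = -((w-u)*(w-v)) + w*(w-v) + w*(w-u)"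
      using uv by (simp add: algebra_simps power2_eq_square)
    then show ?thesis using w(1) d1 d2 by (simp add: field_simps)
  qed
  finally show ?thesis by (simp add: v_def)
qed

definition hk :: "(complex \<Rightarrow> complex) \<Rightarrow> complex \<Rightarrow> complex \<Rightarrow> complex" where
  "hk f t w = f (Jk w) * (((1 - 1/w^2)/2) / (Jk w - t))"

lemma Jk_in_open:
  assumes "\<rho> > 1" "u \<noteq> 0" "cmod u < \<rho>" "cmod (1/u) < \<rho>"
  shows "Jk u \<in> bernstein_ellipse \<rho>"
proof -
  define a where "a = max (cmod u) (1 / cmod u)"
  have a1: "a \<ge> 1"
  proof (cases "cmod u \<ge> 1")
    case True then show ?thesis by (simp add: a_def)
  next
    case False
    then have "1 / cmod u \<ge> 1" using assms(2) by (simp add: field_simps)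
    then show ?thesis by (simp add: a_def)
  qed
  have "a + 1/a = cmod u + 1 / cmod u" by (auto simp: a_def max_def)
  moreover have "a < \<rho>" using assms by (simp add: a_def norm_divide)
  ultimately have "cmod u + 1 / cmod u < \<rho> + 1/\<rho>" using plus_inv_strict[OF a1] by metis
  then show ?thesis using phiJ[OF assms(2)] by (simp add: open_ellipse_eq phiE_def)
qed

lemma cauchy_J_raw:
  fixes f :: "complex \<Rightarrow> complex"
  assumes rho: "\<rho> > 1"
    and contf: "continuous_on (bernstein_ellipse_closed \<rho>) f"
    and holf: "f holomorphic_on bernstein_ellipse \<rho>"
    and t: "t \<in> bernstein_ellipse \<rho>"
  shows "contour_integral (circlepath 0 \<rho>) (hk f t) = 2 * pi * \<i> * winding_number (Jk \<circ> circlepath 0 \<rho>) t * f t"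
    and "hk f t contour_integrable_on (circlepath 0 \<rho>)"
proof -
  define S where "S = bernstein_ellipse_closed \<rho>"
  have sph: "path_image (circlepath 0 \<rho>) = sphere 0 \<rho>" using rho by simp
  have sph0: "path_image (circlepath 0 \<rho>) \<subseteq> - {0}" using rho by auto
  have JS: "Jk w \<in> bernstein_ellipse_boundary \<rho>" if "w \<in> sphere 0 \<rho>" for w
    using that rho by (intro Jk_boundary) auto
  have bS: "bernstein_ellipse_boundary \<rho> \<subseteq> S" unfolding S_def boundary_ellipse_eq closed_ellipse_eq by auto
  have tb: "t \<notin> bernstein_ellipse_boundary \<rho>" using t unfolding open_ellipse_eq boundary_ellipse_eq by auto
  have vp: "valid_path (Jk \<circ> circlepath 0 \<rho>)"
    by (rule valid_path_compose_holomorphic[OF valid_path_circlepath Jk_holo _ sph0]) (simp add: open_Compl)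
  have pim: "path_image (Jk \<circ> circlepath 0 \<rho>) \<subseteq> S - {t}"
    unfolding path_image_compose sph using JS bS tb by blast
  have loop: "pathfinish (Jk \<circ> circlepath 0 \<rho>) = pathstart (Jk \<circ> circlepath 0 \<rho>)"
    by (simp add: pathfinish_compose pathstart_compose)
  have tint: "t \<in> interior S"
    using t open_open_ellipse open_sub_closed interior_maximal unfolding S_def by blast
  have fd: "f field_differentiable at x" if "x \<in> interior S - {}" for x
  proof -
    have "x \<in> bernstein_ellipse \<rho>" using that interior_closed_ellipse[OF rho] unfolding S_def by blast
    then show ?thesis using holf open_open_ellipse holomorphic_on_imp_differentiable_at by blast
  qed
  have C: "((\<lambda>z. f z / (z - t)) has_contour_integral (2*pi * \<i> * winding_number (Jk \<circ> circlepath 0 \<rho>) t * f t)) (Jk \<circ> circlepath 0 \<rho>)"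
    by (rule Cauchy_integral_formula_convex[OF convex_closed_ellipse[of \<rho>, folded S_def] finite.emptyI contf[folded S_def] fd tint vp pim loop])
  have "contour_integral (Jk \<circ> circlepath 0 \<rho>) (\<lambda>z. f z / (z - t))
        = contour_integral (circlepath 0 \<rho>) (\<lambda>w. deriv Jk w * (f (Jk w) / (Jk w - t)))"
    by (rule contour_integral_comp_analyticW[OF Jk_analytic valid_path_circlepath sph0])
  also have "\<dots> = contour_integral (circlepath 0 \<rho>) (hk f t)"
  proof (rule contour_integral_eq)
    fix w assume "w \<in> path_image (circlepath 0 \<rho>)"
    then have "w \<noteq> 0" using sph0 by auto
    then show "deriv Jk w * (f (Jk w) / (Jk w - t)) = hk f t w"
      by (simp add: deriv_Jk hk_def)
  qed
  finally show "contour_integral (circlepath 0 \<rho>) (hk f t) = 2 * pi * \<i> * winding_number (Jk \<circ> circlepath 0 \<rho>) t * f t"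
    using contour_integral_unique[OF C] by simp
  show "hk f t contour_integrable_on (circlepath 0 \<rho>)"
  proof (rule contour_integrable_continuous_circlepath)
    have cJ: "continuous_on (sphere 0 \<rho>) Jk"
      using Jk_holo holomorphic_on_imp_continuous_on continuous_on_subset sph0 sph by blast
    have cfJ: "continuous_on (sphere 0 \<rho>) (\<lambda>w. f (Jk w))"
      by (rule continuous_on_compose2[OF contf cJ]) (use JS bS in \<open>auto simp: S_def\<close>)
    have ne: "Jk w - t \<noteq> 0" if "w \<in> sphere 0 \<rho>" for w using JS[OF that] tb by auto
    show "continuous_on (path_image (circlepath 0 \<rho>)) (hk f t)"
      unfolding sph hk_def using rho ne
      by (intro continuous_intros cfJ cJ) auto
  qed
qed

lemma circle_kernel_integral:
  assumes rho: "\<rho> > 1" and u: "u \<noteq> 0" "cmod u < \<rho>" "cmod (1/u) < \<rho>"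
  shows "contour_integral (circlepath 0 \<rho>) (hk (\<lambda>_. 1) (Jk u)) = 2 * pi * \<i>"
proof -
  have ci: "((\<lambda>x. 1 / (x - a)) has_contour_integral (2 * pi * \<i>)) (circlepath 0 \<rho>)" if "cmod a < \<rho>" for a
    using Cauchy_integral_circlepath_simple[of "\<lambda>_. 1" 0 \<rho> a] that by simp
  have "((\<lambda>w. -(1 / (w - 0)) + 1/(w - u) + 1/(w - 1/u)) has_contour_integral (-(2*pi*\<i>) + 2*pi*\<i> + 2*pi*\<i>)) (circlepath 0 \<rho>)"
    by (intro has_contour_integral_add has_contour_integral_neg ci) (use rho u in auto)
  then have A: "((\<lambda>w. -(1 / w) + 1/(w - u) + 1/(w - 1/u)) has_contour_integral (2*pi*\<i>)) (circlepath 0 \<rho>)"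
    by simp
  have "(hk (\<lambda>_. 1) (Jk u) has_contour_integral (2*pi*\<i>)) (circlepath 0 \<rho>)"
  proof (rule has_contour_integral_eq[OF A])
    fix w assume "w \<in> path_image (circlepath 0 \<rho>)"
    then have w: "cmod w = \<rho>" using rho by simp
    then have "w \<noteq> 0" "w \<noteq> u" "w \<noteq> 1/u" using rho u by auto
    then show "- (1 / w) + 1 / (w - u) + 1 / (w - 1 / u) = hk (\<lambda>_. 1) (Jk u) w"
      unfolding hk_def using partial_frac[OF u(1)] by simp
  qed
  then show ?thesis by (rule contour_integral_unique)
qed

lemma cauchy_J:
  fixes f :: "complex \<Rightarrow> complex"
  assumes rho: "\<rho> > 1"
    and contf: "continuous_on (bernstein_ellipse_closed \<rho>) f"
    and holf: "f holomorphic_on bernstein_ellipse \<rho>"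
    and u: "u \<noteq> 0" "cmod u < \<rho>" "cmod (1/u) < \<rho>"
  shows "(hk f (Jk u) has_contour_integral (2 * pi * \<i> * f (Jk u))) (circlepath 0 \<rho>)"
proof -
  have t: "Jk u \<in> bernstein_ellipse \<rho>" using Jk_in_open[OF rho u] .
  have c1: "continuous_on (bernstein_ellipse_closed \<rho>) (\<lambda>_::complex. 1::complex)" by simp
  have h1: "(\<lambda>_::complex. 1::complex) holomorphic_on bernstein_ellipse \<rho>" by simp
  have W: "winding_number (Jk \<circ> circlepath 0 \<rho>) (Jk u) = 1"
    using cauchy_J_raw(1)[OF rho c1 h1 t] circle_kernel_integral[OF rho u] by simp
  have "contour_integral (circlepath 0 \<rho>) (hk f (Jk u)) = 2 * pi * \<i> * f (Jk u)"
    using cauchy_J_raw(1)[OF rho contf holf t] W by simp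
  then show ?thesis using has_contour_integral_integral[OF cauchy_J_raw(2)[OF rho contf holf t]] by simp
qed


definition ux :: "real \<Rightarrow> complex" where "ux x = Complex x (sqrt (1 - x^2))"

lemma ux_props:
  assumes "-1 \<le> x" "x \<le> 1"
  shows "cmod (ux x) = 1" "ux x \<noteq> 0" "Jk (ux x) = of_real x" "cmod (1 / ux x) = 1"
proof -
  have x2: "x^2 \<le> 1" using assms by (simp add: abs_square_le_1 abs_le_iff)
  show n: "cmod (ux x) = 1" using x2 by (simp add: ux_def cmod_def)
  then show nz: "ux x \<noteq> 0" by auto
  have "1 / ux x = cnj (ux x)" using n by (simp add: complex_div_cnj[of 1 "ux x"])
  then show "Jk (ux x) = of_real x" by (simp add: Jk_def ux_def complex_eq_iff)
  show "cmod (1 / ux x) = 1" using n by (simp add: norm_divide)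
qed

lemma rem_term_bound:
  fixes a w :: complex
  assumes w: "cmod w = \<rho>" and a: "cmod a < \<rho>"
  shows "cmod (a^(Suc R) / (w^(Suc R) * (w - a))) \<le> cmod a ^ Suc R / (\<rho> ^ Suc R * (\<rho> - cmod a))"
proof -
  have r0: "\<rho> > 0" using a norm_ge_zero[of a] by linarith
  have "cmod (w - a) \<ge> \<rho> - cmod a" using norm_triangle_ineq2[of w a] w by simp
  moreover have "\<rho> - cmod a > 0" using a by simp
  ultimately have "\<rho> ^ Suc R * (\<rho> - cmod a) \<le> \<rho> ^ Suc R * cmod (w - a)"
    using r0 by (intro mult_left_mono) auto
  then have "cmod a ^ Suc R / (\<rho> ^ Suc R * cmod (w - a)) \<le> cmod a ^ Suc R / (\<rho> ^ Suc R * (\<rho> - cmod a))"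
    using r0 a by (intro divide_left_mono mult_pos_pos) auto
  then show ?thesis using w by (simp add: norm_divide norm_mult norm_power)
qed

lemma remk_bound:
  fixes u w :: complex
  assumes w: "cmod w = \<rho>" and u: "u \<noteq> 0" "cmod u < \<rho>" "cmod (1/u) < \<rho>"
  shows "cmod (remk R u w) \<le> cmod u ^ Suc R / (\<rho> ^ Suc R * (\<rho> - cmod u))
            + cmod (1/u) ^ Suc R / (\<rho> ^ Suc R * (\<rho> - cmod (1/u)))"
  unfolding remk_def
  using norm_triangle_ineq[of "u^(Suc R) / (w^(Suc R) * (w - u))" "(1/u)^(Suc R) / (w^(Suc R) * (w - 1/u))"]
    rem_term_bound[OF w u(2), of R] rem_term_bound[OF w u(3), of R] by linarith

lemma remk_bound_sigma:
  fixes w :: complex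
  assumes w: "cmod w = \<rho>" and s: "1 \<le> \<sigma>" "\<sigma> < \<rho>"
  shows "cmod (remk R (of_real \<sigma>) w) \<le> 2 * (\<sigma> ^ Suc R / (\<rho> ^ Suc R * (\<rho> - \<sigma>)))"
proof -
  have i: "1/\<sigma> \<le> \<sigma>" using s by (simp add: field_simps) (metis mult_mono' mult_1 order_trans zero_le_one s(1))
  have i0: "1/\<sigma> > 0" using s by simp
  have r0: "\<rho> > 0" using s by simp
  have "cmod (remk R (of_real \<sigma>) w) \<le> \<sigma> ^ Suc R / (\<rho> ^ Suc R * (\<rho> - \<sigma>))
            + (1/\<sigma>) ^ Suc R / (\<rho> ^ Suc R * (\<rho> - 1/\<sigma>))"
    using remk_bound[OF w, of "of_real \<sigma>" R] s i by (simp add: norm_divide)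
  also have "(1/\<sigma>) ^ Suc R / (\<rho> ^ Suc R * (\<rho> - 1/\<sigma>)) \<le> \<sigma> ^ Suc R / (\<rho> ^ Suc R * (\<rho> - \<sigma>))"
  proof (rule frac_le)
    show "(1/\<sigma>) ^ Suc R \<le> \<sigma> ^ Suc R" using i i0 by (intro power_mono) auto
    show "0 < \<rho> ^ Suc R * (\<rho> - \<sigma>)" using s r0 by simp
    show "\<rho> ^ Suc R * (\<rho> - \<sigma>) \<le> \<rho> ^ Suc R * (\<rho> - 1/\<sigma>)" using i r0 by (intro mult_left_mono) auto
  qed (use s in auto)
  finally show ?thesis by (simp add: ac_simps)
qed

lemma remk_bound_unit:
  fixes w u :: complex
  assumes w: "cmod w = \<rho>" and r: "\<rho> > 1" and u: "cmod u = 1"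
  shows "cmod (remk R u w) \<le> 2 / (\<rho> ^ Suc R * (\<rho> - 1))"
proof -
  have u0: "u \<noteq> 0" using u by auto
  have "cmod (1/u) = 1" using u by (simp add: norm_divide)
  then show ?thesis using remk_bound[OF w u0, of R] u r by (simp add: ac_simps)
qed

lemma polk_alt: "polk R t w = - chebC 0 t / w + (\<Sum>k\<le>R. 2 * chebC k t / w^(Suc k))"
  by (simp add: polk_def)

lemma polk_exact:
  fixes c :: "real \<Rightarrow> real" and S :: "real set" and tC :: complex
  assumes fS: "finite S"
    and ex: "\<And>k. k \<le> R \<Longrightarrow> (\<Sum>x\<in>S. of_real (c x) * chebC k (of_real x)) = chebC k tC"
  shows "(\<Sum>x\<in>S. of_real (c x) * polk R (of_real x) w) = polk R tC w"
proof -
  have "(\<Sum>x\<in>S. of_real (c x) * polk R (of_real x) w)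
      = (\<Sum>x\<in>S. - (of_real (c x) * chebC 0 (of_real x)) / w + (\<Sum>k\<le>R. 2 * (of_real (c x) * chebC k (of_real x)) / w^(Suc k)))"
    unfolding polk_alt by (intro sum.cong refl) (simp add: sum_distrib_left algebra_simps)
  also have "\<dots> = - (\<Sum>x\<in>S. of_real (c x) * chebC 0 (of_real x)) / w
        + (\<Sum>k\<le>R. 2 * (\<Sum>x\<in>S. of_real (c x) * chebC k (of_real x)) / w^(Suc k))"
    by (simp add: sum.distrib sum_divide_distrib sum_negf sum_distrib_left sum.swap[of _ S] sum_subtractf)
  also have "\<dots> = polk R tC w"
  proof -
    have e0: "(\<Sum>x\<in>S. of_real (c x) * chebC 0 (of_real x)) = chebC 0 tC" by (rule ex) simp
    have ek: "(\<Sum>k\<le>R. 2 * (\<Sum>x\<in>S. of_real (c x) * chebC k (of_real x)) / w^(Suc k))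
            = (\<Sum>k\<le>R. 2 * chebC k tC / w^(Suc k))"
      by (rule sum.cong) (auto simp: ex)
    show ?thesis unfolding polk_alt by (simp only: e0 ek)
  qed
  finally show ?thesis .
qed

lemma analytic_error:
  fixes f :: "complex \<Rightarrow> complex" and c :: "real \<Rightarrow> real" and S :: "real set"
  assumes rho: "\<rho> > 1"
    and contf: "continuous_on (bernstein_ellipse_closed \<rho>) f"
    and holf: "f holomorphic_on bernstein_ellipse \<rho>"
    and fb: "\<And>z. z \<in> bernstein_ellipse_boundary \<rho> \<Longrightarrow> cmod (f z) \<le> \<kappa>"
    and fS: "finite S" and S1: "\<And>x. x \<in> S \<Longrightarrow> -1 \<le> x \<and> x \<le> 1"
    and exact: "\<And>k. k \<le> R \<Longrightarrow> (\<Sum>x\<in>S. c x * poly (chebR k) x) = poly (chebR k) ((\<sigma> + 1/\<sigma>)/2)"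
    and s: "1 \<le> \<sigma>" "\<sigma> < \<rho>"
  shows "cmod (f (of_real ((\<sigma> + 1/\<sigma>)/2)) - (\<Sum>x\<in>S. of_real (c x) * f (of_real x)))
        \<le> \<kappa> * (2 * (\<sigma> ^ Suc R / (\<rho> ^ Suc R * (\<rho> - \<sigma>))) + (\<Sum>x\<in>S. \<bar>c x\<bar>) * (2 / (\<rho> ^ Suc R * (\<rho> - 1)))) * \<rho>"
proof -
  define tR where "tR = (\<sigma> + 1/\<sigma>)/2"
  define u0 where "u0 = complex_of_real \<sigma>"
  have s0: "\<sigma> > 0" using s by simp
  have u0: "u0 \<noteq> 0" "cmod u0 < \<rho>" "cmod (1/u0) < \<rho>"
  proof -
    show "u0 \<noteq> 0" "cmod u0 < \<rho>" using s by (auto simp: u0_def)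
    have "1/\<sigma> \<le> 1" using s by simp
    moreover have "cmod (1/u0) = 1/\<sigma>" using s0 by (simp add: u0_def norm_divide)
    ultimately show "cmod (1/u0) < \<rho>" using rho by linarith
  qed
  have tC: "Jk u0 = of_real tR" by (simp add: u0_def tR_def Jk_real)
  have H0: "(hk f (of_real tR) has_contour_integral (2 * pi * \<i> * f (of_real tR))) (circlepath 0 \<rho>)"
    using cauchy_J[OF rho contf holf u0] tC by simp
  have Hx: "(hk f (of_real x) has_contour_integral (2 * pi * \<i> * f (of_real x))) (circlepath 0 \<rho>)" if "x \<in> S" for x
  proof -
    have x: "-1 \<le> x" "x \<le> 1" using S1[OF that] by auto
    have u: "ux x \<noteq> 0" "cmod (ux x) < \<rho>" "cmod (1/ux x) < \<rho>" using ux_props[OF x] rho by auto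
    show ?thesis using cauchy_J[OF rho contf holf u] ux_props(3)[OF x] by simp
  qed
  define G where "G w = hk f (of_real tR) w - (\<Sum>x\<in>S. of_real (c x) * hk f (of_real x) w)" for w
  have HG: "(G has_contour_integral (2 * pi * \<i> * f (of_real tR) - (\<Sum>x\<in>S. of_real (c x) * (2 * pi * \<i> * f (of_real x))))) (circlepath 0 \<rho>)"
    unfolding G_def
    by (intro has_contour_integral_diff H0 has_contour_integral_sum fS has_contour_integral_lmul Hx)
  have Eeq: "2 * pi * \<i> * f (of_real tR) - (\<Sum>x\<in>S. of_real (c x) * (2 * pi * \<i> * f (of_real x)))
      = (2 * pi * \<i>) * (f (of_real tR) - (\<Sum>x\<in>S. of_real (c x) * f (of_real x)))"
    by (simp add: algebra_simps sum_distrib_left)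
  define \<Lambda> where "\<Lambda> = (\<Sum>x\<in>S. \<bar>c x\<bar>)"
  define B where "B = \<kappa> * (2 * (\<sigma> ^ Suc R / (\<rho> ^ Suc R * (\<rho> - \<sigma>))) + \<Lambda> * (2 / (\<rho> ^ Suc R * (\<rho> - 1))))"
  have k0: "\<kappa> \<ge> 0"
  proof -
    have "Jk (of_real \<rho>) \<in> bernstein_ellipse_boundary \<rho>" using rho by (intro Jk_boundary) auto
    then show ?thesis using fb norm_ge_zero order_trans by blast
  qed
  have B0: "B \<ge> 0" unfolding B_def \<Lambda>_def using k0 s rho by (intro mult_nonneg_nonneg add_nonneg_nonneg sum_nonneg) auto
  have Gb: "cmod (G w) \<le> B" if w: "cmod (w - 0) = \<rho>" for w
  proof -
    have wr: "cmod w = \<rho>" using w by simp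
    have w0: "w \<noteq> 0" using wr rho by auto
    have split: "hk f (Jk u) w = f (Jk w) * (polk R (Jk u) w + remk R u w)"
      if u: "u \<noteq> 0" "cmod u < \<rho>" "cmod (1/u) < \<rho>" for u
    proof -
      have "w \<noteq> u" "w \<noteq> 1/u" using u wr by auto
      then show ?thesis unfolding hk_def using kernel_split[OF u(1) w0] by (simp add: Jk_def)
    qed
    have sx: "hk f (of_real x) w = f (Jk w) * (polk R (of_real x) w + remk R (ux x) w)" if "x \<in> S" for x
    proof -
      have x: "-1 \<le> x" "x \<le> 1" using S1[OF that] by auto
      have u: "ux x \<noteq> 0" "cmod (ux x) < \<rho>" "cmod (1/ux x) < \<rho>" using ux_props[OF x] rho by auto
      show ?thesis using split[OF u] ux_props(3)[OF x] by simp
    qed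
    have s0': "hk f (of_real tR) w = f (Jk w) * (polk R (of_real tR) w + remk R u0 w)"
      using split[OF u0] tC by simp
    have exC: "(\<Sum>x\<in>S. of_real (c x) * chebC k (of_real x)) = chebC k (of_real tR)" if "k \<le> R" for k
    proof -
      have "(\<Sum>x\<in>S. of_real (c x) * chebC k (of_real x)) = of_real (\<Sum>x\<in>S. c x * poly (chebR k) x)"
        by (simp add: chebC_real)
      also have "\<dots> = chebC k (of_real tR)" using exact[OF that] chebC_real[of k tR] unfolding tR_def by simp
      finally show ?thesis .
    qed
    have pe: "(\<Sum>x\<in>S. of_real (c x) * polk R (of_real x) w) = polk R (of_real tR) w"
      by (rule polk_exact[OF fS exC])
    have "G w = f (Jk w) * (polk R (of_real tR) w + remk R u0 w)
              - (\<Sum>x\<in>S. of_real (c x) * (f (Jk w) * (polk R (of_real x) w + remk R (ux x) w)))"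
    proof -
      have "(\<Sum>x\<in>S. of_real (c x) * hk f (of_real x) w)
          = (\<Sum>x\<in>S. of_real (c x) * (f (Jk w) * (polk R (of_real x) w + remk R (ux x) w)))"
        by (rule sum.cong) (auto simp: sx)
      then show ?thesis unfolding G_def s0' by simp
    qed
    also have "\<dots> = f (Jk w) * ((polk R (of_real tR) w - (\<Sum>x\<in>S. of_real (c x) * polk R (of_real x) w))
              + (remk R u0 w - (\<Sum>x\<in>S. of_real (c x) * remk R (ux x) w)))"
    proof -
      have "(\<Sum>x\<in>S. of_real (c x) * (f (Jk w) * (polk R (of_real x) w + remk R (ux x) w)))
          = f (Jk w) * ((\<Sum>x\<in>S. of_real (c x) * polk R (of_real x) w) + (\<Sum>x\<in>S. of_real (c x) * remk R (ux x) w))"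
        by (simp add: sum_distrib_left sum.distrib[symmetric] algebra_simps)
      then show ?thesis by (simp add: algebra_simps)
    qed
    also have "\<dots> = f (Jk w) * (remk R u0 w - (\<Sum>x\<in>S. of_real (c x) * remk R (ux x) w))"
      using pe by simp
    finally have Gw: "G w = f (Jk w) * (remk R u0 w - (\<Sum>x\<in>S. of_real (c x) * remk R (ux x) w))" .
    have fJ: "cmod (f (Jk w)) \<le> \<kappa>" using fb Jk_boundary[OF w0 wr] by blast
    have r0: "cmod (remk R u0 w) \<le> 2 * (\<sigma> ^ Suc R / (\<rho> ^ Suc R * (\<rho> - \<sigma>)))"
      unfolding u0_def by (rule remk_bound_sigma[OF wr s])
    have rx: "cmod (of_real (c x) * remk R (ux x) w) \<le> \<bar>c x\<bar> * (2 / (\<rho> ^ Suc R * (\<rho> - 1)))" if "x \<in> S" for x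
    proof -
      have x: "-1 \<le> x" "x \<le> 1" using S1[OF that] by auto
      show ?thesis unfolding norm_mult norm_of_real
        by (intro mult_left_mono remk_bound_unit[OF wr rho ux_props(1)[OF x]]) auto
    qed
    have "cmod (remk R u0 w - (\<Sum>x\<in>S. of_real (c x) * remk R (ux x) w))
          \<le> cmod (remk R u0 w) + (\<Sum>x\<in>S. cmod (of_real (c x) * remk R (ux x) w))"
    proof -
      have "cmod (remk R u0 w - (\<Sum>x\<in>S. of_real (c x) * remk R (ux x) w))
          \<le> cmod (remk R u0 w) + cmod (\<Sum>x\<in>S. of_real (c x) * remk R (ux x) w)"
        by (rule norm_triangle_ineq4)
      also have "\<dots> \<le> cmod (remk R u0 w) + (\<Sum>x\<in>S. cmod (of_real (c x) * remk R (ux x) w))"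
        by (intro add_left_mono norm_sum)
      finally show ?thesis .
    qed
    also have "\<dots> \<le> 2 * (\<sigma> ^ Suc R / (\<rho> ^ Suc R * (\<rho> - \<sigma>))) + (\<Sum>x\<in>S. \<bar>c x\<bar> * (2 / (\<rho> ^ Suc R * (\<rho> - 1))))"
      by (intro add_mono r0 sum_mono rx)
    also have "\<dots> = 2 * (\<sigma> ^ Suc R / (\<rho> ^ Suc R * (\<rho> - \<sigma>))) + \<Lambda> * (2 / (\<rho> ^ Suc R * (\<rho> - 1)))"
      unfolding \<Lambda>_def by (rule arg_cong[where f="\<lambda>z. _ + z"], rule sum_distrib_right[symmetric])
    finally have rb: "cmod (remk R u0 w - (\<Sum>x\<in>S. of_real (c x) * remk R (ux x) w)) \<le> \<dots>" .
    show ?thesis unfolding Gw norm_mult B_def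
      by (intro mult_mono fJ rb k0) auto
  qed
  define E where "E = f (of_real tR) - (\<Sum>x\<in>S. of_real (c x) * f (of_real x))"
  have HG': "(G has_contour_integral ((2 * pi * \<i>) * E)) (circlepath 0 \<rho>)"
    using HG unfolding Eeq E_def .
  have "cmod ((2 * pi * \<i>) * E) \<le> B * (2 * pi * \<rho>)"
    by (rule has_contour_integral_bound_circlepath[OF HG' B0 _ Gb]) (use rho in auto)
  moreover have "cmod ((2 * pi * \<i>) * E) = 2 * pi * cmod E" by (simp add: norm_mult)
  ultimately have "2 * pi * cmod E \<le> 2 * pi * (B * \<rho>)" by (simp add: algebra_simps)
  then have "cmod E \<le> B * \<rho>"
    by (metis mult_le_cancel_left_pos pi_gt_zero zero_less_mult_iff zero_less_numeral)
  then show ?thesis by (simp add: E_def B_def \<Lambda>_def tR_def)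
qed

lemma det_holo:
  fixes F :: "complex \<Rightarrow> complex^'n^'n"
  assumes "\<And>i j. (\<lambda>t. F t $ i $ j) holomorphic_on S"
  shows "(\<lambda>t. det (F t)) holomorphic_on S"
  unfolding det_def using assms by (intro holomorphic_intros) auto

lemma det_cont:
  fixes F :: "complex \<Rightarrow> complex^'n^'n"
  assumes "\<And>i j. continuous_on S (\<lambda>t. F t $ i $ j)"
  shows "continuous_on S (\<lambda>t. det (F t))"
  unfolding det_def by (intro continuous_on_sum continuous_on_mult continuous_on_const continuous_on_prod assms)

lemma matrix_inv_right:
  fixes A :: "'a::semiring_1^'n^'n"
  assumes "invertible A"
  shows "A ** matrix_inv A = mat 1"
proof -
  have "\<exists>A'. A ** A' = mat 1 \<and> A' ** A = mat 1" using assms by (simp add: invertible_def)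
  then have "A ** matrix_inv A = mat 1 \<and> matrix_inv A ** A = mat 1"
    unfolding matrix_inv_def by (rule someI_ex)
  then show ?thesis by simp
qed

lemma solve_eq:
  fixes A :: "complex^'n^'n"
  assumes "invertible A"
  shows "A *v (matrix_inv A *v b) = b"
  using matrix_inv_right[OF assms] by (simp add: matrix_vector_mul_assoc)

lemma cramer_x:
  fixes A :: "complex^'n^'n"
  assumes "invertible A"
  shows "(matrix_inv A *v b) $ k = det (\<chi> i j. if j = k then b $ i else A $ i $ j) / det A"
proof -
  have d0: "det A \<noteq> 0" using assms invertible_det_nz by blast
  have "matrix_inv A *v b = (\<chi> k. det (\<chi> i j. if j = k then b $ i else A $ i $ j) / det A)"
    using cramer[OF d0, of "matrix_inv A *v b" b] solve_eq[OF assms] by simp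
  then show ?thesis by simp
qed

lemma bounded_linear_mv:
  fixes A :: "complex^'n^'n"
  shows "bounded_linear (\<lambda>v. A *v v)"
proof -
  have "linear (\<lambda>v. A *v v)"
  proof (rule linearI)
    fix x y :: "complex^'n" show "A *v (x + y) = A *v x + A *v y" by (rule matrix_vector_right_distrib)
  next
    fix r :: real and x :: "complex^'n"
    show "A *v (r *\<^sub>R x) = r *\<^sub>R (A *v x)"
      by (simp add: vec_eq_iff matrix_vector_mult_def scaleR_sum_right)
  qed
  then show ?thesis by (simp add: linear_conv_bounded_linear)
qed

lemma spec_norm_bound:
  fixes A :: "complex^'n^'n"
  shows "norm (A *v v) \<le> spec_norm A * norm v"
  unfolding spec_norm_def by (rule onorm[OF bounded_linear_mv])

lemma spec_norm_nonneg: "spec_norm (A :: complex^'n^'n) \<ge> 0"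
  unfolding spec_norm_def by (rule onorm_pos_le[OF bounded_linear_mv])

lemma entry_cont:
  fixes A :: "complex \<Rightarrow> complex^'n^'n"
  assumes "continuous_on S A"
  shows "continuous_on S (\<lambda>t. A t $ i $ j)"
proof -
  have "continuous_on S (\<lambda>t. A t $ i)"
    using bounded_linear.continuous_on[OF bounded_linear_vec_nth assms] .
  then show ?thesis using bounded_linear.continuous_on[OF bounded_linear_vec_nth] by blast
qed

lemma ventry_cont:
  fixes b :: "complex \<Rightarrow> complex^'n"
  assumes "continuous_on S b"
  shows "continuous_on S (\<lambda>t. b t $ i)"
  using bounded_linear.continuous_on[OF bounded_linear_vec_nth assms] .

lemma sum_le_norm:
  fixes u v :: "complex^'n"
  shows "cmod (\<Sum>i\<in>UNIV. u $ i * v $ i) \<le> norm u * norm v"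
proof -
  have "cmod (\<Sum>i\<in>UNIV. u $ i * v $ i) \<le> (\<Sum>i\<in>UNIV. cmod (u $ i) * cmod (v $ i))"
    using norm_sum[of "\<lambda>i. u $ i * v $ i" UNIV] by (simp add: norm_mult)
  also have "\<dots> = (\<Sum>i\<in>UNIV. \<bar>cmod (u $ i)\<bar> * \<bar>cmod (v $ i)\<bar>)" by simp
  also have "\<dots> \<le> L2_set (\<lambda>i. cmod (u $ i)) UNIV * L2_set (\<lambda>i. cmod (v $ i)) UNIV"
    by (rule L2_set_mult_ineq)
  also have "\<dots> = norm u * norm v" by (simp add: norm_vec_def)
  finally show ?thesis .
qed

lemma norm_dual:
  fixes v :: "complex^'n"
  assumes "v \<noteq> 0"
  shows "(\<Sum>i\<in>UNIV. (\<chi> i. cnj (v $ i) / of_real (norm v)) $ i * v $ i) = of_real (norm v)"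
    and "norm (\<chi> i. cnj (v $ i) / of_real (norm v)) = 1"
proof -
  have nv: "norm v > 0" using assms by simp
  have sq: "(norm v)^2 = (\<Sum>i\<in>UNIV. (cmod (v $ i))^2)"
    unfolding norm_vec_def L2_set_def by (simp add: sum_nonneg)
  have "(\<Sum>i\<in>UNIV. (\<chi> i. cnj (v $ i) / of_real (norm v)) $ i * v $ i)
      = (\<Sum>i\<in>UNIV. of_real ((cmod (v $ i))^2)) / of_real (norm v)"
  proof -
    have e: "\<And>z. cnj z * z = complex_of_real ((cmod z)^2)" by (subst complex_norm_square) (simp add: mult.commute)
    show ?thesis unfolding sum_divide_distrib by (rule sum.cong) (simp_all add: e)
  qed
  also have "\<dots> = of_real ((norm v)^2) / of_real (norm v)" unfolding sq by simp
  also have "\<dots> = of_real (norm v)" using nv by (simp add: power2_eq_square)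
  finally show "(\<Sum>i\<in>UNIV. (\<chi> i. cnj (v $ i) / of_real (norm v)) $ i * v $ i) = of_real (norm v)" .
  have "norm (\<chi> i. cnj (v $ i) / of_real (norm v)) = norm ((1 / norm v) *\<^sub>R (\<chi> i. cnj (v $ i)))"
    by (rule arg_cong[where f=norm]) (simp add: vec_eq_iff scaleR_conv_of_real[where 'a=complex])
  also have "\<dots> = norm (\<chi> i. cnj (v $ i)) / norm v" using nv by simp
  also have "norm (\<chi> i. cnj (v $ i)) = norm v" by (simp add: norm_vec_def)
  finally show "norm (\<chi> i. cnj (v $ i) / of_real (norm v)) = 1" using nv by simp
qed

lemma numeric_C:
  fixes R M :: nat
  assumes M: "M \<ge> 2" and MR: "4 * real R ^ 2 \<le> real M - 1"
  defines "ti \<equiv> 1 + 2 / (real M - 1)"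
  defines "\<sigma> \<equiv> ti + sqrt (ti\<^sup>2 - 1)"
  defines "C \<equiv> 5 * sqrt 5 * sqrt (2 * real R + 1) * sqrt (real M) / sqrt (2 * (real M - 1))"
  shows "3 * (real R + 1) * sqrt (\<sigma>\<^sup>2 - 1) \<le> C * \<sigma>"
proof -
  define h where "h = 2 / (real M - 1)"
  have Mr: "real M - 1 \<ge> 1" using M by simp
  have h0: "h > 0" and h2: "h \<le> 2" using Mr by (auto simp: h_def field_simps)
  have tih: "ti = 1 + h" by (simp add: ti_def h_def)
  define q where "q = sqrt (ti\<^sup>2 - 1)"
  have qq: "q^2 = h * (2 + h)" using h0 by (simp add: q_def tih power2_eq_square algebra_simps)
  have q0: "q \<ge> 0" using h0 by (simp add: q_def tih)
  have sq: "\<sigma> = ti + q" by (simp add: \<sigma>_def q_def)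
  have s1: "\<sigma> \<ge> 1" using q0 h0 by (simp add: sq tih)
  have s2: "\<sigma>\<^sup>2 - 1 = 2 * q * \<sigma>"
  proof -
    have "ti^2 - 1 = q^2" using h0 by (simp add: q_def tih power2_eq_square algebra_simps)
    then show ?thesis by (simp add: sq power2_eq_square algebra_simps)
  qed
  have C0: "C \<ge> 0" using Mr by (simp add: C_def)
  have C2: "C^2 \<ge> 125 * (2 * real R + 1) / 2"
  proof -
    have "C^2 = 125 * (2 * real R + 1) * real M / (2 * (real M - 1))"
      using Mr by (simp add: C_def power_divide power_mult_distrib real_sqrt_mult[symmetric])
    also have "\<dots> \<ge> 125 * (2 * real R + 1) / 2"
    proof -
      have "real M / (real M - 1) \<ge> 1" using Mr by simp
      then have "125 * (2 * real R + 1) / 2 * 1 \<le> 125 * (2 * real R + 1) / 2 * (real M / (real M - 1))"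
        by (intro mult_left_mono) auto
      then show ?thesis by (simp add: field_simps)
    qed
    finally show ?thesis .
  qed
  have key: "18 * (real R + 1)^2 * q \<le> 125 * (2 * real R + 1) / 2"
  proof (cases "R = 0")
    case True
    have "h * (2 + h) \<le> 2 * (2 + 2)" using h0 h2 by (intro mult_mono) auto
    then have "q^2 \<le> 3^2" using qq by simp
    then have "q \<le> 3" by (rule power2_le_imp_le) simp
    then show ?thesis using True by simp
  next
    case False
    define Rr where "Rr = real R"
    have R1: "Rr \<ge> 1" using False by (simp add: Rr_def)
    have hR: "h \<le> 1 / (2 * Rr^2)"
    proof -
      have "h = 2 / (real M - 1)" by (simp add: h_def)
      also have "\<dots> \<le> 2 / (4 * Rr^2)"
      proof (rule divide_left_mono)
        show "4 * Rr^2 \<le> real M - 1" using MR by (simp add: Rr_def)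
        show "0 < (real M - 1) * (4 * Rr^2)" using Mr R1 by (intro mult_pos_pos) auto
      qed simp
      finally show ?thesis by simp
    qed
    have hh: "h \<le> 1/2"
    proof -
      have "Rr^2 \<ge> 1" using R1 by (simp add: one_le_power)
      then have "1 / (2 * Rr^2) \<le> 1/2" by (intro divide_left_mono) auto
      then show ?thesis using hR by simp
    qed
    have "q^2 \<le> (12/10 / Rr)^2"
    proof -
      have "q^2 \<le> h * (5/2)" unfolding qq using h0 hh by (intro mult_left_mono) auto
      also have "\<dots> \<le> 1 / (2 * Rr^2) * (5/2)" using hR by (intro mult_right_mono) auto
      also have "\<dots> = (5/4) / Rr^2" by simp
      also have "\<dots> \<le> (144/100) / Rr^2" using R1 by (intro divide_right_mono) auto
      also have "\<dots> = (12/10 / Rr)^2" by (simp add: power_divide)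
      finally show ?thesis .
    qed
    then have qR: "q \<le> 12/10 / Rr" by (rule power2_le_imp_le) (use R1 in simp)
    have "18 * (Rr + 1)^2 * q \<le> 18 * (Rr + 1)^2 * (12/10 / Rr)"
      using qR by (intro mult_left_mono) auto
    also have "\<dots> \<le> 18 * (2 * Rr)^2 * (12/10 / Rr)"
    proof -
      have "(Rr + 1)^2 \<le> (2 * Rr)^2" using R1 by (intro power_mono) auto
      moreover have "12/10 / Rr \<ge> 0" using R1 by simp
      ultimately show ?thesis by (intro mult_right_mono) auto
    qed
    also have "\<dots> = 864/10 * Rr"
    proof -
      have "Rr \<noteq> 0" using R1 by simp
      then show ?thesis by (simp add: power2_eq_square)
    qed
    also have "\<dots> \<le> 125 * (2 * Rr + 1) / 2" using R1 by simp
    finally show ?thesis by (simp add: Rr_def)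
  qed
  have "(3 * (real R + 1) * sqrt (\<sigma>\<^sup>2 - 1))^2 = 9 * (real R + 1)^2 * (2 * q * \<sigma>)"
    using s2 q0 s1 by (simp add: power_mult_distrib power2_eq_square algebra_simps)
  also have "\<dots> = (18 * (real R + 1)^2 * q) * \<sigma>" by simp
  also have "\<dots> \<le> (125 * (2 * real R + 1) / 2) * \<sigma>" using key s1 by (intro mult_right_mono) auto
  also have "\<dots> \<le> C^2 * \<sigma>" using C2 s1 by (intro mult_right_mono) auto
  also have "\<dots> \<le> C^2 * \<sigma>^2"
  proof -
    have "\<sigma> \<le> \<sigma>^2" using s1 by (simp add: power2_eq_square)
    then show ?thesis by (intro mult_left_mono) auto
  qed
  also have "\<dots> = (C * \<sigma>)^2" by (simp add: power_mult_distrib)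
  finally have "(3 * (real R + 1) * sqrt (\<sigma>\<^sup>2 - 1))^2 \<le> (C * \<sigma>)^2" .
  then show ?thesis by (rule power2_le_imp_le) (use C0 s1 in simp)
qed

definition cram :: "(complex \<Rightarrow> complex^'n^'n) \<Rightarrow> (complex \<Rightarrow> complex^'n) \<Rightarrow> 'n \<Rightarrow> complex \<Rightarrow> complex" where
  "cram A b k t = det (\<chi> i j. if j = k then b t $ i else A t $ i $ j) / det (A t)"

lemma xs_eq_cram:
  fixes A :: "complex \<Rightarrow> complex^'n^'n" and b :: "complex \<Rightarrow> complex^'n"
  assumes "invertible (A t)"
  shows "matrix_inv (A t) *v b t = (\<chi> k. cram A b k t)"
  using cramer_x[OF assms] by (simp add: vec_eq_iff cram_def)

lemma cram_holo:
  fixes A :: "complex \<Rightarrow> complex^'n^'n" and b :: "complex \<Rightarrow> complex^'n"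
  assumes hA: "\<And>i j. (\<lambda>t. A t $ i $ j) holomorphic_on E"
    and hb: "\<And>i. (\<lambda>t. b t $ i) holomorphic_on E"
    and inv: "\<And>t. t \<in> E \<Longrightarrow> invertible (A t)"
  shows "cram A b k holomorphic_on E"
proof -
  have h1: "(\<lambda>t. det (\<chi> i j. if j = k then b t $ i else A t $ i $ j)) holomorphic_on E"
  proof (rule det_holo)
    fix i j
    show "(\<lambda>t. (\<chi> i j. if j = k then b t $ i else A t $ i $ j) $ i $ j) holomorphic_on E"
      using hA hb by (cases "j = k") auto
  qed
  have h2: "(\<lambda>t. det (A t)) holomorphic_on E" by (rule det_holo[OF hA])
  have nz: "det (A t) \<noteq> 0" if "t \<in> E" for t using inv[OF that] invertible_det_nz by blast
  show ?thesis unfolding cram_def[abs_def] using h1 h2 nz by (intro holomorphic_intros) auto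
qed

lemma cram_cont:
  fixes A :: "complex \<Rightarrow> complex^'n^'n" and b :: "complex \<Rightarrow> complex^'n"
  assumes hA: "continuous_on E A"
    and hb: "continuous_on E b"
    and inv: "\<And>t. t \<in> E \<Longrightarrow> invertible (A t)"
  shows "continuous_on E (cram A b k)"
proof -
  have h1: "continuous_on E (\<lambda>t. det (\<chi> i j. if j = k then b t $ i else A t $ i $ j))"
  proof (rule det_cont)
    fix i j
    show "continuous_on E (\<lambda>t. (\<chi> i j. if j = k then b t $ i else A t $ i $ j) $ i $ j)"
      using entry_cont[OF hA] ventry_cont[OF hb] by (cases "j = k") auto
  qed
  have h2: "continuous_on E (\<lambda>t. det (A t))" by (rule det_cont[OF entry_cont[OF hA]])
  have nz: "det (A t) \<noteq> 0" if "t \<in> E" for t using inv[OF that] invertible_det_nz by blast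
  show ?thesis unfolding cram_def[abs_def] using h1 h2 nz by (intro continuous_intros) auto
qed

lemma phi_holo:
  fixes A :: "complex \<Rightarrow> complex^'n^'n" and b :: "complex \<Rightarrow> complex^'n"
  assumes hA: "\<And>i j. (\<lambda>t. A t $ i $ j) holomorphic_on E"
    and hb: "\<And>i. (\<lambda>t. b t $ i) holomorphic_on E"
    and inv: "\<And>t. t \<in> E \<Longrightarrow> invertible (A t)"
  shows "(\<lambda>t. \<Sum>i\<in>UNIV. u $ i * (matrix_inv (A t) *v b t) $ i) holomorphic_on E"
proof (rule holomorphic_transform)
  show "(\<lambda>t. \<Sum>i\<in>UNIV. u $ i * cram A b i t) holomorphic_on E"
    using cram_holo[OF hA hb inv] by (intro holomorphic_intros) auto
  fix t assume "t \<in> E"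
  then show "(\<Sum>i\<in>UNIV. u $ i * cram A b i t) = (\<Sum>i\<in>UNIV. u $ i * (matrix_inv (A t) *v b t) $ i)"
    using xs_eq_cram[where A=A and b=b and t=t, OF inv] by simp
qed

lemma phi_cont:
  fixes A :: "complex \<Rightarrow> complex^'n^'n" and b :: "complex \<Rightarrow> complex^'n"
  assumes hA: "continuous_on E A" and hb: "continuous_on E b"
    and inv: "\<And>t. t \<in> E \<Longrightarrow> invertible (A t)"
  shows "continuous_on E (\<lambda>t. \<Sum>i\<in>UNIV. u $ i * (matrix_inv (A t) *v b t) $ i)"
proof -
  have "continuous_on E (\<lambda>t. \<Sum>i\<in>UNIV. u $ i * cram A b i t)"
    using cram_cont[OF hA hb inv] by (intro continuous_intros) auto
  then show ?thesis
  proof (rule continuous_on_eq)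
    fix t assume "t \<in> E"
    then show "(\<Sum>i\<in>UNIV. u $ i * cram A b i t) = (\<Sum>i\<in>UNIV. u $ i * (matrix_inv (A t) *v b t) $ i)"
      using xs_eq_cram[where A=A and b=b and t=t, OF inv] by simp
  qed
qed

lemma xs_cont:
  fixes A :: "complex \<Rightarrow> complex^'n^'n" and b :: "complex \<Rightarrow> complex^'n"
  assumes hA: "continuous_on E A" and hb: "continuous_on E b"
    and inv: "\<And>t. t \<in> E \<Longrightarrow> invertible (A t)"
  shows "continuous_on E (\<lambda>t. matrix_inv (A t) *v b t)"
proof -
  have "continuous_on E (\<lambda>t. \<chi> k. cram A b k t)"
    using cram_cont[OF hA hb inv] by (intro continuous_intros) auto
  then show ?thesis
  proof (rule continuous_on_eq)
    fix t assume "t \<in> E"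
    then show "(\<chi> k. cram A b k t) = matrix_inv (A t) *v b t"
      using xs_eq_cram[where A=A and b=b and t=t, OF inv] by simp
  qed
qed

lemma compact_boundary:
  "compact (bernstein_ellipse_boundary \<rho>)"
proof -
  have "closed (bernstein_ellipse_boundary \<rho>)"
    unfolding boundary_ellipse_eq phiE_def
    by (intro closed_Collect_eq continuous_intros)
  moreover have "bernstein_ellipse_boundary \<rho> \<subseteq> cball 0 (\<rho> + 1/\<rho>)"
  proof
    fix z assume z: "z \<in> bernstein_ellipse_boundary \<rho>"
    have "cmod ((z - 1) + (z + 1)) \<le> cmod (z - 1) + cmod (z + 1)" by (rule norm_triangle_ineq)
    then have "2 * cmod z \<le> \<rho> + 1/\<rho>" using z by (simp add: boundary_ellipse_eq phiE_def)
    moreover have "cmod z \<le> 2 * cmod z" by simp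
    ultimately have "cmod z \<le> \<rho> + 1/\<rho>" by linarith
    then show "z \<in> cball 0 (\<rho> + 1/\<rho>)" by simp
  qed
  ultimately show ?thesis using bounded_cball bounded_subset compact_eq_bounded_closed by blast
qed

lemma sigma_facts:
  fixes ti :: real
  assumes "ti > 1" and \<sigma>_def: "\<sigma> = ti + sqrt (ti\<^sup>2 - 1)"
  shows "\<sigma> > 1" "(\<sigma> + 1/\<sigma>)/2 = ti" "\<sigma>\<^sup>2 - 1 > 0"
proof -
  define q where "q = sqrt (ti\<^sup>2 - 1)"
  have tq: "ti\<^sup>2 - 1 > 0" using assms by (simp add: power2_eq_square) (smt (verit) mult_less_cancel_left2)
  have q0: "q > 0" using tq by (simp add: q_def)
  have qq: "q^2 = ti\<^sup>2 - 1" using tq by (simp add: q_def)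
  have sq: "\<sigma> = ti + q" by (simp add: \<sigma>_def q_def)
  show s1: "\<sigma> > 1" using q0 assms(1) unfolding sq by simp
  have "\<sigma> * (ti - q) = ti^2 - q^2" by (simp add: sq algebra_simps power2_eq_square)
  then have "\<sigma> * (ti - q) = 1" using qq by simp
  then have "1/\<sigma> = ti - q" using s1 by (simp add: field_simps)
  then show "(\<sigma> + 1/\<sigma>)/2 = ti" by (simp add: sq)
  show "\<sigma>\<^sup>2 - 1 > 0" using s1 by (simp add: power2_eq_square) (smt (verit) mult_less_cancel_left2)
qed

lemma discrete_part:
  fixes M R :: nat
  assumes M: "M \<ge> 2" and MR: "4 * real R ^ 2 \<le> real M - 1"
  defines "ti \<equiv> 1 + 2 / (real M - 1)"
  defines "\<sigma> \<equiv> ti + sqrt (ti\<^sup>2 - 1)"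
  defines "C \<equiv> 5 * sqrt 5 * sqrt (2 * real R + 1) * sqrt (real M) / sqrt (2 * (real M - 1))"
  shows "\<exists>S c. S \<subseteq> (\<lambda>j. -1 + real j * (2 / (real M - 1))) ` {..<M} \<and> finite S \<and>
     (\<forall>k\<le>R. (\<Sum>x\<in>S. c x * poly (chebR k) x) = poly (chebR k) ti) \<and>
     (\<Sum>x\<in>S. \<bar>c x\<bar>) \<le> C * \<sigma> ^ Suc R / sqrt (\<sigma>\<^sup>2 - 1)"
proof -
  define h where "h = 2 / (real M - 1)"
  have Mr: "real M - 1 \<ge> 1" using M by simp
  have h0: "h > 0" using Mr by (simp add: h_def)
  define tj where "tj j = -1 + real j * h" for j
  define G where "G = tj ` {..<M}"
  have injG: "inj_on tj {..<M}" using h0 by (auto simp: inj_on_def tj_def)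
  have fG: "finite G" by (simp add: G_def)
  have cG: "card G = M" using injG by (simp add: G_def card_image)
  have R4: "4 * R^2 \<le> M - 1"
  proof -
    have "real (4 * R^2) \<le> real (M - 1)" using MR M by (simp add: of_nat_diff)
    then show ?thesis by (simp only: of_nat_le_iff)
  qed
  have RM: "Suc R \<le> M"
  proof -
    have "R \<le> R^2" by (simp add: power2_eq_square)
    also have "\<dots> \<le> 4 * R^2" by simp
    finally show ?thesis using R4 M by linarith
  qed
  obtain S where S: "S \<subseteq> G" "card S = Suc R" and Smax: "\<forall>S'. S' \<subseteq> G \<and> card S' = Suc R \<longrightarrow> Vd S' \<le> Vd S"
    using fekete_exists[OF fG, of R] cG RM by blast
  have fS: "finite S" using S fG finite_subset by blast
  define c where "c x = lag S x ti" for x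
  have ti1: "ti > 1" using Mr by (simp add: ti_def)
  note sf = sigma_facts[OF ti1 \<sigma>_def[THEN meta_eq_to_obj_eq]]
  have exact: "(\<Sum>x\<in>S. c x * poly (chebR k) x) = poly (chebR k) ti" if "k \<le> R" for k
    unfolding c_def by (rule lagrange_exact[OF fS S(2)]) (use degree_chebR[of k] that in linarith)
  have lagb: "\<bar>c x\<bar> \<le> 3 * \<sigma> ^ R" if x: "x \<in> S" for x
  proof -
    define p where "p = Lpoly S x"
    have dp: "degree p \<le> R" using degree_Lpoly[OF fS x] S(2) by (simp add: p_def)
    have grid: "\<bar>poly p (-1 + real j * (2 / (real M - 1)))\<bar> \<le> 1" if "j < M" for j
    proof -
      have "tj j \<in> G" using that by (simp add: G_def)
      then have "\<bar>lag S x (tj j)\<bar> \<le> 1" by (rule lag_fekete_bound[OF fG S Smax x])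
      then show ?thesis by (simp add: p_def poly_Lpoly tj_def h_def)
    qed
    have b3: "\<bar>poly p y\<bar> \<le> 3" if "-1 \<le> y" "y \<le> 1" for y
      by (rule norming[OF M R4 dp grid that])
    have bndC: "cmod (\<Sum>k\<le>R. complex_of_real (coeff p k) * (complex_of_real y)^k) \<le> 3" if "-1 \<le> y" "y \<le> 1" for y
    proof -
      have "(\<Sum>k\<le>R. complex_of_real (coeff p k) * (complex_of_real y)^k) = of_real (poly p y)"
        by (simp add: poly_as_sum[OF dp])
      then show ?thesis using b3[OF that] by simp
    qed
    have zt: "cmod (complex_of_real ti - 1) + cmod (complex_of_real ti + 1) \<le> \<sigma> + 1/\<sigma>"
    proof -
      have "cmod (complex_of_real ti - 1) = ti - 1" using ti1 norm_of_real[of "ti - 1"] by simp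
      moreover have "cmod (complex_of_real ti + 1) = ti + 1" using ti1 norm_of_real[of "ti + 1"] by simp
      ultimately show ?thesis using sf(2) by simp
    qed
    have "cmod (\<Sum>k\<le>R. complex_of_real (coeff p k) * (complex_of_real ti)^k) \<le> 3 * \<sigma> ^ R"
      using bernstein_ellipse_bound[where a="\<lambda>k. complex_of_real (coeff p k)" and R=R and N=3 and s=\<sigma> and z="complex_of_real ti"]
        bndC sf(1) zt by simp
    moreover have "(\<Sum>k\<le>R. complex_of_real (coeff p k) * (complex_of_real ti)^k) = of_real (poly p ti)"
      by (simp add: poly_as_sum[OF dp])
    ultimately show ?thesis by (simp add: c_def p_def poly_Lpoly)
  qed
  have "(\<Sum>x\<in>S. \<bar>c x\<bar>) \<le> (\<Sum>x\<in>S. 3 * \<sigma> ^ R)" by (rule sum_mono) (rule lagb)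
  also have "\<dots> = 3 * (real R + 1) * \<sigma> ^ R" using S(2) by simp
  also have "\<dots> \<le> C * \<sigma> ^ Suc R / sqrt (\<sigma>\<^sup>2 - 1)"
  proof -
    have num: "3 * (real R + 1) * sqrt (\<sigma>\<^sup>2 - 1) \<le> C * \<sigma>"
      using numeric_C[OF M MR] unfolding C_def \<sigma>_def ti_def .
    have sq0: "sqrt (\<sigma>\<^sup>2 - 1) > 0" using sf(3) by simp
    have "3 * (real R + 1) * \<sigma> ^ R = 3 * (real R + 1) * sqrt (\<sigma>\<^sup>2 - 1) * \<sigma> ^ R / sqrt (\<sigma>\<^sup>2 - 1)"
      using sq0 by simp
    also have "\<dots> \<le> C * \<sigma> * \<sigma> ^ R / sqrt (\<sigma>\<^sup>2 - 1)"
      using num sq0 sf(1) by (intro divide_right_mono mult_right_mono) auto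
    also have "\<dots> = C * \<sigma> ^ Suc R / sqrt (\<sigma>\<^sup>2 - 1)" by (simp add: mult.assoc)
    finally show ?thesis .
  qed
  finally have Lb: "(\<Sum>x\<in>S. \<bar>c x\<bar>) \<le> C * \<sigma> ^ Suc R / sqrt (\<sigma>\<^sup>2 - 1)" .
  show ?thesis
    using S(1) fS exact Lb unfolding G_def tj_def h_def by blast
qed

theorem theorem2:
  fixes A :: "complex \<Rightarrow> complex^'n^'n"
    and b :: "complex \<Rightarrow> complex^'n"
    and \<rho> :: real and M R :: nat
    and sstar :: "complex^'n"
  assumes rho: "\<rho> > 1"
    and A_cont: "continuous_on (bernstein_ellipse_closed \<rho>) A"
    and b_cont: "continuous_on (bernstein_ellipse_closed \<rho>) b"
    and A_an: "\<And>i j. (\<lambda>t. A t $ i $ j) analytic_on bernstein_ellipse \<rho>"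
    and b_an: "\<And>i. (\<lambda>t. b t $ i) analytic_on bernstein_ellipse \<rho>"
    and A_inv: "\<And>t. t \<in> bernstein_ellipse_closed \<rho> \<Longrightarrow> invertible (A t)"
    and M: "M \<ge> 2"
    and r_lt: "(1 + 2 / (real M - 1) + sqrt ((1 + 2 / (real M - 1))\<^sup>2 - 1)) / \<rho> < 1"
    and sstar_in: "sstar \<in> {\<Sum>j<M. c j *s (matrix_inv (A (complex_of_real (-1 + real j * (2 / (real M - 1)))))
                                     *v b (complex_of_real (-1 + real j * (2 / (real M - 1))))) | c. True}"
    and sstar_min: "\<And>s. s \<in> {\<Sum>j<M. c j *s (matrix_inv (A (complex_of_real (-1 + real j * (2 / (real M - 1)))))
                                     *v b (complex_of_real (-1 + real j * (2 / (real M - 1))))) | c. True} \<Longrightarrow>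
         norm (A (complex_of_real (1 + 2 / (real M - 1))) *v sstar - b (complex_of_real (1 + 2 / (real M - 1))))
         \<le> norm (A (complex_of_real (1 + 2 / (real M - 1))) *v s - b (complex_of_real (1 + 2 / (real M - 1))))"
    and R: "real R \<le> sqrt (real M - 1) / 2"
  shows "let ti = 1 + 2 / (real M - 1);
             r = (ti + sqrt (ti\<^sup>2 - 1)) / \<rho>;
             \<kappa> = Sup ((\<lambda>t. norm (matrix_inv (A t) *v b t)) ` bernstein_ellipse_boundary \<rho>);
             C = 5 * sqrt 5 * sqrt (2 * real R + 1) * sqrt (real M) / sqrt (2 * (real M - 1))
         in norm (A (complex_of_real ti) *v sstar - b (complex_of_real ti))
            \<le> 2 * spec_norm (A (complex_of_real ti)) * \<kappa>
              * (1 / (1 - r) + C * \<rho> / ((\<rho> - 1) * sqrt (\<rho>\<^sup>2 * r\<^sup>2 - 1))) * r ^ (R + 1)"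
proof -
  define ti where "ti = 1 + 2 / (real M - 1)"
  define \<sigma> where "\<sigma> = ti + sqrt (ti\<^sup>2 - 1)"
  define r where "r = \<sigma> / \<rho>"
  define \<kappa> where "\<kappa> = Sup ((\<lambda>t. norm (matrix_inv (A t) *v b t)) ` bernstein_ellipse_boundary \<rho>)"
  define C where "C = 5 * sqrt 5 * sqrt (2 * real R + 1) * sqrt (real M) / sqrt (2 * (real M - 1))"
  define xs where "xs t = matrix_inv (A t) *v b t" for t
  define tj where "tj j = -1 + real j * (2 / (real M - 1))" for j
  have Mr: "real M - 1 \<ge> 1" using M by simp
  have ti1: "ti > 1" using Mr by (simp add: ti_def)
  note sf = sigma_facts[OF ti1 \<sigma>_def]
  have r0: "\<rho> > 0" using rho by simp
  have sr: "\<sigma> < \<rho>" using r_lt r0 by (simp add: \<sigma>_def ti_def divide_less_eq)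
  have MR: "4 * real R ^ 2 \<le> real M - 1"
  proof -
    have "2 * real R \<le> sqrt (real M - 1)" using R by simp
    then have "(2 * real R)^2 \<le> (sqrt (real M - 1))^2" by (intro power_mono) auto
    then show ?thesis using Mr by (simp add: power_mult_distrib)
  qed
  obtain S c where S: "S \<subseteq> tj ` {..<M}" and fS: "finite S"
    and exact: "\<forall>k\<le>R. (\<Sum>x\<in>S. c x * poly (chebR k) x) = poly (chebR k) ti"
    and Lb: "(\<Sum>x\<in>S. \<bar>c x\<bar>) \<le> C * \<sigma> ^ Suc R / sqrt (\<sigma>\<^sup>2 - 1)"
    using discrete_part[OF M MR] unfolding tj_def ti_def \<sigma>_def C_def by blast
  have tj11: "-1 \<le> tj j \<and> tj j \<le> 1" if "j < M" for j
  proof -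
    have "real j \<le> real M - 1" using that by linarith
    then have "real j * (2 / (real M - 1)) \<le> 2" using Mr by (simp add: field_simps)
    moreover have "real j * (2 / (real M - 1)) \<ge> 0" using Mr by simp
    ultimately show ?thesis by (simp add: tj_def)
  qed
  have S1: "-1 \<le> x \<and> x \<le> 1" if "x \<in> S" for x using S that tj11 by blast
  have injtj: "inj_on tj {..<M}" using Mr by (auto simp: inj_on_def tj_def)
  define E where "E = bernstein_ellipse \<rho>"
  define Ec where "Ec = bernstein_ellipse_closed \<rho>"
  have EEc: "E \<subseteq> Ec" unfolding E_def Ec_def by (rule open_sub_closed)
  have inv: "\<And>t. t \<in> Ec \<Longrightarrow> invertible (A t)" using A_inv by (simp add: Ec_def)
  have c2: "\<rho> + 1/\<rho> > 2" using plus_inv_strict[of 1 \<rho>] rho by simp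
  have xE: "complex_of_real x \<in> E" if "-1 \<le> x" "x \<le> 1" for x
  proof -
    have "cmod (complex_of_real x - 1) = 1 - x" using that norm_of_real[of "x - 1"] by simp
    moreover have "cmod (complex_of_real x + 1) = 1 + x" using that norm_of_real[of "x + 1"] by simp
    ultimately show ?thesis using c2 by (simp add: E_def bernstein_ellipse_def)
  qed
  have tiE: "complex_of_real ti \<in> E"
  proof -
    have "Jk (complex_of_real \<sigma>) \<in> bernstein_ellipse \<rho>"
    proof (rule Jk_in_open)
      have a: "1/\<sigma> < 1" using sf(1) by simp
      have b: "cmod (1 / complex_of_real \<sigma>) = 1/\<sigma>" using sf(1) by (simp add: norm_divide)
      show "cmod (1 / complex_of_real \<sigma>) < \<rho>" using a b rho by linarith
    qed (use sf(1) sr rho in auto)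
    then show ?thesis using sf(2) by (simp add: Jk_real E_def)
  qed
  have bS: "bernstein_ellipse_boundary \<rho> \<subseteq> Ec" unfolding Ec_def boundary_ellipse_eq closed_ellipse_eq by auto
  have xsc: "continuous_on Ec xs" unfolding xs_def Ec_def using A_cont b_cont A_inv by (intro xs_cont) auto
  have bdd: "bdd_above ((\<lambda>t. norm (xs t)) ` bernstein_ellipse_boundary \<rho>)"
  proof -
    have "continuous_on (bernstein_ellipse_boundary \<rho>) (\<lambda>t. norm (xs t))"
      using continuous_on_subset[OF xsc bS] by (intro continuous_intros)
    then have "compact ((\<lambda>t. norm (xs t)) ` bernstein_ellipse_boundary \<rho>)"
      using compact_boundary by (intro compact_continuous_image)
    then show ?thesis by (intro bounded_imp_bdd_above compact_imp_bounded)
  qed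
  have kb: "norm (xs z) \<le> \<kappa>" if "z \<in> bernstein_ellipse_boundary \<rho>" for z
    unfolding \<kappa>_def xs_def[symmetric] using that bdd by (intro cSup_upper) auto
  have k0: "\<kappa> \<ge> 0"
  proof -
    have "Jk (complex_of_real \<rho>) \<in> bernstein_ellipse_boundary \<rho>" using rho by (intro Jk_boundary) auto
    then show ?thesis using kb norm_ge_zero order_trans by blast
  qed
  define cc where "cc j = (if tj j \<in> S then complex_of_real (c (tj j)) else 0)" for j
  define sv where "sv = (\<Sum>j<M. cc j *s xs (complex_of_real (tj j)))"
  have sv_in: "sv \<in> {\<Sum>j<M. c j *s (matrix_inv (A (complex_of_real (-1 + real j * (2 / (real M - 1)))))
                                     *v b (complex_of_real (-1 + real j * (2 / (real M - 1))))) | c. True}"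
    unfolding sv_def xs_def tj_def by blast
  have sv_eq: "sv = (\<Sum>x\<in>S. complex_of_real (c x) *s xs (complex_of_real x))"
  proof -
    have "sv = (\<Sum>j\<in>{j\<in>{..<M}. tj j \<in> S}. complex_of_real (c (tj j)) *s xs (complex_of_real (tj j)))"
      unfolding sv_def cc_def by (subst sum.inter_filter) (auto intro!: sum.cong)
    also have "\<dots> = (\<Sum>x\<in>tj ` {j\<in>{..<M}. tj j \<in> S}. complex_of_real (c x) *s xs (complex_of_real x))"
      by (rule sum.reindex[symmetric, unfolded o_def]) (rule inj_on_subset[OF injtj], auto)
    also have "tj ` {j\<in>{..<M}. tj j \<in> S} = S" using S by auto
    finally show ?thesis .
  qed
  define v where "v = xs (complex_of_real ti) - sv"
  define \<Lambda> where "\<Lambda> = (\<Sum>x\<in>S. \<bar>c x\<bar>)"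
  define Bv where "Bv = \<kappa> * (2 * (\<sigma> ^ Suc R / (\<rho> ^ Suc R * (\<rho> - \<sigma>))) + \<Lambda> * (2 / (\<rho> ^ Suc R * (\<rho> - 1)))) * \<rho>"
  have Bv0: "Bv \<ge> 0" unfolding Bv_def \<Lambda>_def using k0 sr rho r0 sf(1)
    by (intro mult_nonneg_nonneg add_nonneg_nonneg sum_nonneg divide_nonneg_nonneg zero_le_power) auto
  have vb: "norm v \<le> Bv"
  proof (cases "v = 0")
    case True then show ?thesis using Bv0 by simp
  next
    case False
    define u where "u = (\<chi> i. cnj (v $ i) / complex_of_real (norm v))"
    note nd = norm_dual[OF False, folded u_def]
    define \<phi> where "\<phi> t = (\<Sum>i\<in>UNIV. u $ i * (matrix_inv (A t) *v b t) $ i)" for t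
    have ph: "\<phi> holomorphic_on E" unfolding \<phi>_def[abs_def]
    proof (rule phi_holo)
      show "\<And>i j. (\<lambda>t. A t $ i $ j) holomorphic_on E" using A_an by (simp add: E_def analytic_imp_holomorphic)
      show "\<And>i. (\<lambda>t. b t $ i) holomorphic_on E" using b_an by (simp add: E_def analytic_imp_holomorphic)
      show "\<And>t. t \<in> E \<Longrightarrow> invertible (A t)" using inv EEc by blast
    qed
    have pc: "continuous_on Ec \<phi>" unfolding \<phi>_def[abs_def] Ec_def
      by (rule phi_cont[OF A_cont b_cont A_inv])
    have pb: "cmod (\<phi> z) \<le> \<kappa>" if "z \<in> bernstein_ellipse_boundary \<rho>" for z
    proof -
      have "cmod (\<phi> z) \<le> norm u * norm (xs z)" unfolding \<phi>_def xs_def by (rule sum_le_norm)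
      then show ?thesis using nd(2) kb[OF that] by simp
    qed
    have ex': "\<And>k. k \<le> R \<Longrightarrow> (\<Sum>x\<in>S. c x * poly (chebR k) x) = poly (chebR k) ((\<sigma> + 1/\<sigma>)/2)"
      using exact sf(2) by simp
    have AE: "cmod (\<phi> (of_real ((\<sigma> + 1/\<sigma>)/2)) - (\<Sum>x\<in>S. of_real (c x) * \<phi> (of_real x)))
        \<le> \<kappa> * (2 * (\<sigma> ^ Suc R / (\<rho> ^ Suc R * (\<rho> - \<sigma>))) + (\<Sum>x\<in>S. \<bar>c x\<bar>) * (2 / (\<rho> ^ Suc R * (\<rho> - 1)))) * \<rho>"
      by (rule analytic_error[OF rho pc[unfolded Ec_def] ph[unfolded E_def] pb fS S1 ex' less_imp_le[OF sf(1)] sr])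
    have "\<phi> (of_real ti) - (\<Sum>x\<in>S. of_real (c x) * \<phi> (of_real x)) = (\<Sum>i\<in>UNIV. u $ i * v $ i)"
    proof -
      have "(\<Sum>x\<in>S. of_real (c x) * \<phi> (of_real x)) = (\<Sum>i\<in>UNIV. u $ i * sv $ i)"
        unfolding \<phi>_def sv_eq xs_def
        by (simp add: sum_distrib_left sum.swap[of _ S] algebra_simps)
      then show ?thesis unfolding v_def \<phi>_def xs_def by (simp add: sum_subtractf algebra_simps)
    qed
    also have "\<dots> = of_real (norm v)" using nd(1) by simp
    finally show ?thesis using AE sf(2) by (simp add: Bv_def \<Lambda>_def)
  qed
  have tiEc: "complex_of_real ti \<in> Ec" using tiE EEc by blast
  have res: "norm (A (complex_of_real ti) *v sstar - b (complex_of_real ti)) \<le> spec_norm (A (complex_of_real ti)) * norm v"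
  proof -
    have "norm (A (complex_of_real ti) *v sstar - b (complex_of_real ti))
        \<le> norm (A (complex_of_real ti) *v sv - b (complex_of_real ti))"
      using sstar_min[OF sv_in] unfolding ti_def .
    also have "A (complex_of_real ti) *v sv - b (complex_of_real ti) = A (complex_of_real ti) *v (- v)"
    proof -
      have "b (complex_of_real ti) = A (complex_of_real ti) *v xs (complex_of_real ti)"
        unfolding xs_def using solve_eq[OF inv[OF tiEc]] by simp
      then show ?thesis by (simp add: v_def matrix_vector_mult_diff_distrib matrix_vector_right_distrib)
    qed
    also have "norm (A (complex_of_real ti) *v (- v)) \<le> spec_norm (A (complex_of_real ti)) * norm (- v)"
      by (rule spec_norm_bound)
    finally show ?thesis by simp
  qed
  have sp0: "spec_norm (A (complex_of_real ti)) \<ge> 0" by (rule spec_norm_nonneg)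
  have rr: "r > 0" "r < 1" using sf(1) sr r0 by (auto simp: r_def)
  have e1: "\<sigma> ^ Suc R / (\<rho> ^ Suc R * (\<rho> - \<sigma>)) * \<rho> = r ^ Suc R / (1 - r)"
    using r0 sr by (simp add: r_def power_divide field_simps)
  have rs: "\<rho>\<^sup>2 * r\<^sup>2 = \<sigma>\<^sup>2" using r0 by (simp add: r_def power_divide)
  have e2: "\<Lambda> * (2 / (\<rho> ^ Suc R * (\<rho> - 1))) * \<rho> \<le> 2 * (C * \<rho> / ((\<rho> - 1) * sqrt (\<rho>\<^sup>2 * r\<^sup>2 - 1)) * r ^ Suc R)"
  proof -
    have "\<Lambda> * (2 / (\<rho> ^ Suc R * (\<rho> - 1))) * \<rho> = 2 * (\<Lambda> / (\<rho> ^ R * (\<rho> - 1)))"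
      using r0 rho by (simp add: field_simps)
    also have "\<dots> \<le> 2 * ((C * \<sigma> ^ Suc R / sqrt (\<sigma>\<^sup>2 - 1)) / (\<rho> ^ R * (\<rho> - 1)))"
    proof -
      have "\<rho> ^ R * (\<rho> - 1) > 0" using rho r0 by simp
      then have "\<Lambda> / (\<rho> ^ R * (\<rho> - 1)) \<le> (C * \<sigma> ^ Suc R / sqrt (\<sigma>\<^sup>2 - 1)) / (\<rho> ^ R * (\<rho> - 1))"
        using Lb unfolding \<Lambda>_def by (intro divide_right_mono) auto
      then show ?thesis by simp
    qed
    also have "(C * \<sigma> ^ Suc R / sqrt (\<sigma>\<^sup>2 - 1)) / (\<rho> ^ R * (\<rho> - 1)) = C * \<rho> / ((\<rho> - 1) * sqrt (\<rho>\<^sup>2 * r\<^sup>2 - 1)) * r ^ Suc R"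
      unfolding rs using r0 rho by (simp add: r_def power_divide field_simps)
    finally show ?thesis .
  qed
  have "Bv \<le> 2 * \<kappa> * (1 / (1 - r) + C * \<rho> / ((\<rho> - 1) * sqrt (\<rho>\<^sup>2 * r\<^sup>2 - 1))) * r ^ (R + 1)"
  proof -
    have "Bv = \<kappa> * (2 * (\<sigma> ^ Suc R / (\<rho> ^ Suc R * (\<rho> - \<sigma>)) * \<rho>) + \<Lambda> * (2 / (\<rho> ^ Suc R * (\<rho> - 1))) * \<rho>)"
      by (simp add: Bv_def algebra_simps)
    also have "\<dots> \<le> \<kappa> * (2 * (r ^ Suc R / (1 - r)) + 2 * (C * \<rho> / ((\<rho> - 1) * sqrt (\<rho>\<^sup>2 * r\<^sup>2 - 1)) * r ^ Suc R))"
      unfolding e1 using e2 k0 by (intro mult_left_mono add_left_mono) auto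
    also have "\<dots> = 2 * \<kappa> * (1 / (1 - r) + C * \<rho> / ((\<rho> - 1) * sqrt (\<rho>\<^sup>2 * r\<^sup>2 - 1))) * r ^ (R + 1)"
      by (simp add: algebra_simps)
    finally show ?thesis .
  qed
  then have final: "norm (A (complex_of_real ti) *v sstar - b (complex_of_real ti))
      \<le> 2 * spec_norm (A (complex_of_real ti)) * \<kappa> * (1 / (1 - r) + C * \<rho> / ((\<rho> - 1) * sqrt (\<rho>\<^sup>2 * r\<^sup>2 - 1))) * r ^ (R + 1)"
  proof -
    have "norm (A (complex_of_real ti) *v sstar - b (complex_of_real ti)) \<le> spec_norm (A (complex_of_real ti)) * norm v"
      by (rule res)
    also have "\<dots> \<le> spec_norm (A (complex_of_real ti)) * Bv" using vb sp0 by (rule mult_left_mono)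
    also have "\<dots> \<le> spec_norm (A (complex_of_real ti)) * (2 * \<kappa> * (1 / (1 - r) + C * \<rho> / ((\<rho> - 1) * sqrt (\<rho>\<^sup>2 * r\<^sup>2 - 1))) * r ^ (R + 1))"
      using \<open>Bv \<le> _\<close> sp0 by (rule mult_left_mono)
    finally show ?thesis by (simp only: mult.assoc mult.left_commute)
  qed
  show ?thesis
    using final unfolding Let_def ti_def[symmetric] r_def \<sigma>_def \<kappa>_def C_def .
qed

end
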